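(* Assume $n > 3t+2d$. Then Algorithm 1 implements the MBRB abstraction, i.e. it satisfies MBRB-Validity, MBRB-No-duplication, MBRB-No-duplicity, MBRB-Local-delivery and MBRB-Global-delivery, with $\ell = c-d$. Moreover, if a correct process mbrb-broadcasts an app-message $m$ with sequence number $sn$, then at least $c-d$ correct processes mbrb-deliver $(m,sn)$ from it within 2 communication steps if $d < \frac{c-\lfloor (n+t)/2\rfloor}{\lfloor (n+t)/2\rfloor+1}$, and within 3 communication steps if $d < c-\sqrt{c\cdot\frac{n+t}{2}}$. Finally, the mbrb-broadcast of an app-message by a correct process entails the sending of at most $2n^2$ implementation messages by correct processes.
   Context: System model. There are $n$ asynchronous sequential processes $p_1,\dots,p_n$ with distinct identities $1,\dots,n$ known to all. Up to $t$ processes are Byzantine (they may behave arbitrarily and collude; a crash counts as a Byzantine failure); the others are correct. In a given execution, $c$ denotes the number of correct processes, so $n-t\le c\le n$. Processes communicate over a fully connected asynchronous point-to-point network that never corrupts, duplicates or creates messages. The operation "broadcast $M$" by a process means sending the implementation message (imp-message) $M$ to each of the $n$ processes (including itself); correct processes send only via this operation. A message adversary with parameter $d$, $0\le d<c$, may, for each broadcast by a correct process, suppress up to $d$ of the copies addressed to correct processes; all other copies sent between correct processes are eventually received. Digital signatures are unforgeable: each process has a key pair, all public keys and their owners are known, and only $p_k$ can produce a valid signature by $p_k$; a process produces at most one signature per signed item. MBRB abstraction. An application message (app-message) $m$ is mbrb-broadcast by $p_i$ with a sequence number $sn$ (invocation $\mathrm{mbrb\_broadcast}(m,sn)$); a correct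 process never uses the same sequence number twice. A process mbrb-delivers a triplet $(m,sn,j)$ meaning app-message $m$ from $p_j$ with sequence number $sn$. Properties: MBRB-Validity: if a correct process mbrb-delivers $m$ from a correct $p_j$ with sequence number $sn$, then $p_j$ mbrb-broadcast $m$ with sequence number $sn$. MBRB-No-duplication: a correct process mbrb-delivers at most one app-message from $p_j$ with sequence number $sn$. MBRB-No-duplicity: no two correct processes mbrb-deliver different app-messages from the same $p_i$ with the same $sn$. MBRB-Local-delivery: if a correct $p_i$ mbrb-broadcasts $m$ with $sn$, at least one correct process eventually mbrb-delivers $m$ from $p_i$ with $sn$. MBRB-Global-delivery (with parameter $\ell$): if a correct process mbrb-delivers $m$ from $p_j$ with $sn$, then at least $\ell$ correct processes mbrb-deliver $m$ from $p_j$ with $sn$. Algorithm 1 (code for $p_i$). Each process stores, for each triplet $(m,sn,j)$, a set of saved valid signatures of that triplet, at most one per signer. On $\mathrm{mbrb\_broadcast}(m,sn)$: $p_i$ saves its own signature of $(m,sn,i)$ and broadcasts $\mathrm{BUNDLE}(m,sn,i,S)$ where $S$ is the set of all saved signatures for $(m,sn,i)$. On receiving $\mathrm{BUNDLE}(m,sn,j,sigs)$: if $p_i$ has not already mbrb-delivered some triplet $(-,sn,j)$ and $sigs$ contains a valid signature of $(m,sn,j)$ by $p_j$, then: (1) $p_i$ saves all not-yet-saved valid signatures of $(m,sn,j)$ contained in $sigs$; (2) if $p_i$ has not yet signed any triplet $(-,sn,j)$, it saves its own signature of $(m,sn,j)$ and broadcasts $\mathrm{BUNDLE}(m,sn,j,\text{all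 saved signatures for }(m,sn,j))$; (3) if strictly more than $\frac{n+t}{2}$ signatures for $(m,sn,j)$ are saved, it broadcasts $\mathrm{BUNDLE}(m,sn,j,\text{all saved signatures for }(m,sn,j))$ and then mbrb-delivers $(m,sn,j)$. Time is measured in communication steps: local computation takes zero time and all imp-messages have the same transfer delay (one step). *)

theory Defs
  imports Complex_Main "HOL-Library.Multiset"
begin

text \<open>Processes are identified by the naturals 1..n.  A triplet (m, sn, j) is an
app-message m from p_j with sequence number sn.  A signature is modelled abstractly
as a pair (k, T): "the signature of item T by p_k".  Unforgeability is modelled by
restricting which such pairs Byzantine processes may put into messages.\<close>

type_synonym 'm trip = "'m \<times> nat \<times> nat"
type_synonym 'm sig = "nat \<times> 'm trip"

datatype 'm msg = Bundle 'm nat nat "'m sig set"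

fun msg_sigs :: "'m msg \<Rightarrow> 'm sig set" where
  "msg_sigs (Bundle m sn j sigs) = sigs"

fun msg_key :: "'m msg \<Rightarrow> nat \<times> nat" where
  "msg_key (Bundle m sn j sigs) = (sn, j)"

record 'm lstate =
  saved   :: "'m trip \<Rightarrow> nat set"    \<comment> \<open>signers of the saved valid signatures of each triplet\<close>
  signed  :: "'m trip set"
  dlog    :: "'m trip list"             \<comment> \<open>mbrb-deliveries, in order\<close>
  invoked :: "('m \<times> nat) set"          \<comment> \<open>mbrb-broadcast invocations (m, sn)\<close>
  bclog   :: "'m msg list"              \<comment> \<open>imp-messages broadcast, in order\<close>

definition init_lstate :: "'m lstate" where
  "init_lstate = \<lparr>saved = (\<lambda>_. {}), signed = {}, dlog = [], invoked = {}, bclog = []\<rparr>"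

definition valid_signers :: "nat \<Rightarrow> 'm trip \<Rightarrow> 'm sig set \<Rightarrow> nat set" where
  "valid_signers n T sigs = {k. (k, T) \<in> sigs \<and> k \<in> {1..n}}"

definition sig_set :: "'m trip \<Rightarrow> nat set \<Rightarrow> 'm sig set" where
  "sig_set T K = (\<lambda>k. (k, T)) ` K"

definition add_sigs :: "'m trip \<Rightarrow> nat set \<Rightarrow> 'm lstate \<Rightarrow> 'm lstate" where
  "add_sigs T K s = s\<lparr>saved := (saved s)(T := saved s T \<union> K)\<rparr>"

definition sign :: "nat \<Rightarrow> 'm trip \<Rightarrow> 'm lstate \<Rightarrow> 'm lstate" where
  "sign i T s = (add_sigs T {i} s)\<lparr>signed := insert T (signed s)\<rparr>"

definition signed_some :: "nat \<Rightarrow> nat \<Rightarrow> 'm lstate \<Rightarrow> bool" where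
  "signed_some sn j s \<longleftrightarrow> (\<exists>m. (m, sn, j) \<in> signed s)"

definition delivered_some :: "nat \<Rightarrow> nat \<Rightarrow> 'm lstate \<Rightarrow> bool" where
  "delivered_some sn j s \<longleftrightarrow> (\<exists>m. (m, sn, j) \<in> set (dlog s))"

text \<open>Handler of mbrb_broadcast(m, sn) at p_i: returns new state and broadcasts.\<close>
definition on_invoke :: "nat \<Rightarrow> 'm \<Rightarrow> nat \<Rightarrow> 'm lstate \<Rightarrow> 'm lstate \<times> 'm msg list" where
  "on_invoke i m sn s =
    (let T = (m, sn, i);
         s1 = (sign i T s)\<lparr>invoked := insert (m, sn) (invoked s)\<rparr>;
         M = Bundle m sn i (sig_set T (saved s1 T))
     in (s1\<lparr>bclog := bclog s1 @ [M]\<rparr>, [M]))"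

text \<open>Handler of the reception of BUNDLE(m, sn, j, sigs) at p_i (threshold uses n and t).\<close>
definition on_bundle :: "nat \<Rightarrow> nat \<Rightarrow> nat \<Rightarrow> 'm \<Rightarrow> nat \<Rightarrow> nat \<Rightarrow> 'm sig set \<Rightarrow> 'm lstate
                          \<Rightarrow> 'm lstate \<times> 'm msg list" where
  "on_bundle n t i m sn j sigs s =
    (let T = (m, sn, j) in
     if delivered_some sn j s \<or> j \<notin> valid_signers n T sigs then (s, [])
     else
       let s1 = add_sigs T (valid_signers n T sigs) s;
           s2 = (if signed_some sn j s1 then s1 else sign i T s1);
           out2 = (if signed_some sn j s1 then [] else [Bundle m sn j (sig_set T (saved s2 T))]);
           dlv = (n + t < 2 * card (saved s2 T));
           out3 = (if dlv then [Bundle m sn j (sig_set T (saved s2 T))] else []);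
           s3 = (if dlv then s2\<lparr>dlog := dlog s2 @ [T]\<rparr> else s2)
       in (s3\<lparr>bclog := bclog s3 @ out2 @ out3\<rparr>, out2 @ out3))"

text \<open>A message copy in transit: (sender, destination, imp-message, sending time).\<close>
type_synonym 'm copy = "nat \<times> nat \<times> 'm msg \<times> nat"

fun cp_dst :: "'m copy \<Rightarrow> nat" where "cp_dst (s, q, M, \<tau>) = q"
fun cp_msg :: "'m copy \<Rightarrow> 'm msg" where "cp_msg (s, q, M, \<tau>) = M"
fun cp_time :: "'m copy \<Rightarrow> nat" where "cp_time (s, q, M, \<tau>) = \<tau>"

record 'm config =
  loc   :: "nat \<Rightarrow> 'm lstate"        \<comment> \<open>local states (meaningful for correct processes)\<close>
  net   :: "'m copy multiset"         \<comment> \<open>copies sent and not yet received\<close>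
  bknow :: "'m sig set"               \<comment> \<open>signatures received so far by Byzantine processes\<close>
  clock :: nat                        \<comment> \<open>current time, in communication steps\<close>

definition init_config :: "'m config" where
  "init_config = \<lparr>loc = (\<lambda>_. init_lstate), net = {#}, bknow = {}, clock = 0\<rparr>"

text \<open>Copies of a broadcast of M by p_i at time tau, the copies to the processes in D
being suppressed by the message adversary.\<close>
definition bcast_copies :: "nat \<Rightarrow> nat \<Rightarrow> nat \<Rightarrow> 'm msg \<Rightarrow> nat set \<Rightarrow> 'm copy multiset" where
  "bcast_copies n i \<tau> M D = image_mset (\<lambda>q. (i, q, M, \<tau>)) (mset_set ({1..n} - D))"

definition all_copies :: "nat \<Rightarrow> nat \<Rightarrow> nat \<Rightarrow> 'm msg list \<Rightarrow> nat set list \<Rightarrow> 'm copy multiset" where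
  "all_copies n i \<tau> Ms Ds = sum_list (map (\<lambda>(M, D). bcast_copies n i \<tau> M D) (zip Ms Ds))"

text \<open>Message-adversary choices: one suppression set per broadcast, each containing at most
d correct processes.\<close>
definition adv_ok :: "nat \<Rightarrow> nat set \<Rightarrow> 'm msg list \<Rightarrow> nat set list \<Rightarrow> bool" where
  "adv_ok d C Ms Ds \<longleftrightarrow> length Ds = length Ms \<and> (\<forall>D \<in> set Ds. D \<subseteq> C \<and> card D \<le> d)"

datatype 'm action =
    Invoke nat 'm nat "nat set list"
  | Recv "'m copy" "nat set list"
  | ByzSend nat nat "'m msg"
  | ByzRecv "'m copy"
  | Tick

text \<open>One atomic step.  If sync holds, every imp-message has transfer delay exactly one
step (used for the latency claims); otherwise the network is asynchronous.\<close>
definition step :: "bool \<Rightarrow> nat \<Rightarrow> nat \<Rightarrow> nat \<Rightarrow> nat set \<Rightarrow> 'm action \<Rightarrow> 'm config \<Rightarrow> 'm config \<Rightarrow> bool" where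
  "step sync n t d C a cf cf' =
    (case a of
       Invoke i m sn Ds \<Rightarrow>
         i \<in> C \<and> (\<forall>m'. (m', sn) \<notin> invoked (loc cf i)) \<and>
         (let (s', outs) = on_invoke i m sn (loc cf i) in
            adv_ok d C outs Ds \<and>
            cf' = cf\<lparr>loc := (loc cf)(i := s'), net := net cf + all_copies n i (clock cf) outs Ds\<rparr>)
     | Recv cp Ds \<Rightarrow>
         cp \<in># net cf \<and> cp_dst cp \<in> C \<and> (sync \<longrightarrow> cp_time cp < clock cf) \<and>
         (case cp_msg cp of Bundle m sn j sigs \<Rightarrow>
            (let q = cp_dst cp; (s', outs) = on_bundle n t q m sn j sigs (loc cf q) in
               adv_ok d C outs Ds \<and>
               cf' = cf\<lparr>loc := (loc cf)(q := s'),
                        net := (net cf - {#cp#}) + all_copies n q (clock cf) outs Ds\<rparr>))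
     | ByzSend b q M \<Rightarrow>
         b \<in> {1..n} - C \<and> q \<in> {1..n} \<and>
         (\<forall>(k, T) \<in> msg_sigs M. k \<in> C \<longrightarrow> (k, T) \<in> bknow cf) \<and>
         cf' = cf\<lparr>net := net cf + {#(b, q, M, clock cf)#}\<rparr>
     | ByzRecv cp \<Rightarrow>
         cp \<in># net cf \<and> cp_dst cp \<notin> C \<and> (sync \<longrightarrow> cp_time cp < clock cf) \<and>
         cf' = cf\<lparr>net := net cf - {#cp#}, bknow := bknow cf \<union> msg_sigs (cp_msg cp)\<rparr>
     | Tick \<Rightarrow>
         (sync \<longrightarrow> (\<forall>cp \<in># net cf. clock cf \<le> cp_time cp)) \<and>
         cf' = cf\<lparr>clock := Suc (clock cf)\<rparr>)"

definition execution :: "bool \<Rightarrow> nat \<Rightarrow> nat \<Rightarrow> nat \<Rightarrow> nat set \<Rightarrow> (nat \<Rightarrow> 'm action)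
                          \<Rightarrow> (nat \<Rightarrow> 'm config) \<Rightarrow> bool" where
  "execution sync n t d C acts cfs \<longleftrightarrow>
     cfs 0 = init_config \<and> (\<forall>k. step sync n t d C (acts k) (cfs k) (cfs (Suc k)))"

definition fair :: "nat set \<Rightarrow> (nat \<Rightarrow> 'm action) \<Rightarrow> (nat \<Rightarrow> 'm config) \<Rightarrow> bool" where
  "fair C acts cfs \<longleftrightarrow>
     (\<forall>k cp. cp \<in># net (cfs k) \<and> cp_dst cp \<in> C \<longrightarrow> (\<exists>k' \<ge> k. \<exists>Ds. acts k' = Recv cp Ds))"

definition time_progresses :: "(nat \<Rightarrow> 'm action) \<Rightarrow> bool" where
  "time_progresses acts \<longleftrightarrow> (\<forall>k. \<exists>k' \<ge> k. acts k' = Tick)"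

definition delivered :: "'m config \<Rightarrow> nat \<Rightarrow> 'm trip \<Rightarrow> bool" where
  "delivered cf q T \<longleftrightarrow> T \<in> set (dlog (loc cf q))"

end

theory Submission
  imports Defs
begin

lemma on_bundle_skip:
  assumes "delivered_some sn j s \<or> j \<notin> valid_signers n (m,sn,j) sigs"
  shows "on_bundle n t q m sn j sigs s = (s, [])"
  using assms unfolding on_bundle_def by (simp add: Let_def)

lemma on_bundle_go:
  fixes q :: nat and n t :: nat and m :: 'm and s :: "'m lstate"
  assumes "\<not> delivered_some sn j s" "j \<in> valid_signers n (m,sn,j) sigs"
  defines "T \<equiv> (m,sn,j)"
  defines "ss \<equiv> signed_some sn j s"
  defines "sv \<equiv> saved s T \<union> valid_signers n T sigs \<union> (if ss then {} else {q})"
  defines "dlv \<equiv> n + t < 2 * card sv"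
  defines "M \<equiv> Bundle m sn j (sig_set T sv)"
  defines "outs \<equiv> (if ss then [] else [M]) @ (if dlv then [M] else [])"
  shows "on_bundle n t q m sn j sigs s =
     (s\<lparr>saved := (saved s)(T := sv),
        signed := (if ss then signed s else insert T (signed s)),
        dlog := dlog s @ (if dlv then [T] else []),
        bclog := bclog s @ outs\<rparr>, outs)"
  using assms(1,2) unfolding on_bundle_def T_def ss_def sv_def dlv_def M_def outs_def
  by (auto simp add: Let_def sign_def add_sigs_def signed_some_def)

lemma on_invoke_eq:
  "on_invoke i m sn s = (s\<lparr>saved := (saved s)((m,sn,i) := saved s (m,sn,i) \<union> {i}),
      signed := insert (m,sn,i) (signed s), invoked := insert (m,sn) (invoked s),
      bclog := bclog s @ [Bundle m sn i (sig_set (m,sn,i) (saved s (m,sn,i) \<union> {i}))]\<rparr>,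
      [Bundle m sn i (sig_set (m,sn,i) (saved s (m,sn,i) \<union> {i}))])"
  unfolding on_invoke_def by (simp add: Let_def sign_def add_sigs_def)

lemma mem_sig_set[simp]: "(k, T') \<in> sig_set T X \<longleftrightarrow> T' = T \<and> k \<in> X"
  unfolding sig_set_def by auto

lemma valid_signers_sig_set[simp]: "valid_signers n T (sig_set T X) = X \<inter> {1..n}"
  unfolding valid_signers_def sig_set_def by auto

lemma mem_valid_signers: "k \<in> valid_signers n T sigs \<longleftrightarrow> (k,T) \<in> sigs \<and> 1 \<le> k \<and> k \<le> n"
  unfolding valid_signers_def by auto

lemma all_copies_mem:
  "cp \<in># all_copies n i \<tau> Ms Ds \<Longrightarrow> \<exists>q M. cp = (i,q,M,\<tau>) \<and> M \<in> set Ms \<and> q \<in> {1..n}"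
proof (induction Ms arbitrary: Ds)
  case Nil then show ?case by (simp add: all_copies_def)
next
  case (Cons M Ms)
  show ?case
  proof (cases Ds)
    case Nil then show ?thesis using Cons.prems by (simp add: all_copies_def)
  next
    case (Cons D Ds')
    have "cp \<in># bcast_copies n i \<tau> M D \<or> cp \<in># all_copies n i \<tau> Ms Ds'"
      using Cons.prems \<open>Ds = D # Ds'\<close> by (simp add: all_copies_def)
    then show ?thesis
    proof
      assume "cp \<in># bcast_copies n i \<tau> M D"
      then show ?thesis by (auto simp add: bcast_copies_def)
    next
      assume "cp \<in># all_copies n i \<tau> Ms Ds'"
      then show ?thesis using Cons.IH by fastforce
    qed
  qed
qed

lemma all_copies_nth:
  assumes "p < length Ms" "length Ds = length Ms" "q \<in> {1..n} - Ds ! p"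
  shows "(i, q, Ms ! p, \<tau>) \<in># all_copies n i \<tau> Ms Ds"
  using assms
proof (induction Ms arbitrary: Ds p)
  case Nil then show ?case by simp
next
  case (Cons M Ms)
  then obtain D Ds' where Ds: "Ds = D # Ds'" by (cases Ds) auto
  show ?case
  proof (cases p)
    case 0
    then have "(i, q, M, \<tau>) \<in># bcast_copies n i \<tau> M D"
      using Cons.prems Ds by (auto simp add: bcast_copies_def)
    then show ?thesis using 0 Ds by (simp add: all_copies_def)
  next
    case (Suc p')
    then have "(i, q, Ms ! p', \<tau>) \<in># all_copies n i \<tau> Ms Ds'"
      using Cons Ds by auto
    then show ?thesis using Suc Ds by (simp add: all_copies_def)
  qed
qed

definition keyf :: "nat \<Rightarrow> nat \<Rightarrow> 'm trip \<Rightarrow> bool" where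
  "keyf sn j = (\<lambda>(m', sn', j'). sn' = sn \<and> j' = j)"

definition minv :: "nat \<Rightarrow> nat \<Rightarrow> nat set \<Rightarrow> 'm config \<Rightarrow> bool" where
 "minv n t C cf \<longleftrightarrow>
  (\<forall>q\<in>C. \<forall>T. saved (loc cf q) T \<subseteq> {1..n}) \<and>
  (\<forall>q\<in>C. \<forall>k\<in>C. \<forall>T. k \<in> saved (loc cf q) T \<longrightarrow> T \<in> signed (loc cf k)) \<and>
  (\<forall>cp\<in>#net cf. \<forall>k T. (k,T) \<in> msg_sigs (cp_msg cp) \<longrightarrow> k \<in> C \<longrightarrow> T \<in> signed (loc cf k)) \<and>
  (\<forall>k T. (k,T) \<in> bknow cf \<longrightarrow> k \<in> C \<longrightarrow> T \<in> signed (loc cf k)) \<and>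
  (\<forall>q\<in>C. \<forall>k\<in>C. \<forall>m sn. (m,sn,k) \<in> signed (loc cf q) \<longrightarrow> (m,sn) \<in> invoked (loc cf k)) \<and>
  (\<forall>q\<in>C. \<forall>m1 m2 sn j. (m1,sn,j) \<in> signed (loc cf q) \<longrightarrow> (m2,sn,j) \<in> signed (loc cf q) \<longrightarrow> m1 = m2) \<and>
  (\<forall>k\<in>C. \<forall>m1 m2 sn. (m1,sn) \<in> invoked (loc cf k) \<longrightarrow> (m2,sn) \<in> invoked (loc cf k) \<longrightarrow> m1 = m2) \<and>
  (\<forall>q\<in>C. \<forall>m sn j. (m,sn,j) \<in> set (dlog (loc cf q)) \<longrightarrow>
       j \<in> saved (loc cf q) (m,sn,j) \<and> n + t < 2 * card (saved (loc cf q) (m,sn,j)) \<and> signed_some sn j (loc cf q)) \<and>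
  (\<forall>q\<in>C. \<forall>sn j. length (filter (keyf sn j) (dlog (loc cf q))) \<le> 1) \<and>
  (\<forall>q\<in>C. \<forall>sn j. length (filter (\<lambda>M. msg_key M = (sn,j)) (bclog (loc cf q)))
       \<le> (if signed_some sn j (loc cf q) then 1 else 0) + (if delivered_some sn j (loc cf q) then 1 else 0))"

lemma invD:
  assumes "minv n t C cf"
  shows Ia: "\<forall>q\<in>C. \<forall>T. saved (loc cf q) T \<subseteq> {1..n}"
  and Ib: "\<forall>q\<in>C. \<forall>k\<in>C. \<forall>T. k \<in> saved (loc cf q) T \<longrightarrow> T \<in> signed (loc cf k)"
  and Ic: "\<forall>cp\<in>#net cf. \<forall>k T. (k,T) \<in> msg_sigs (cp_msg cp) \<longrightarrow> k \<in> C \<longrightarrow> T \<in> signed (loc cf k)"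
  and Id: "\<forall>k T. (k,T) \<in> bknow cf \<longrightarrow> k \<in> C \<longrightarrow> T \<in> signed (loc cf k)"
  and Ie: "\<forall>q\<in>C. \<forall>k\<in>C. \<forall>m sn. (m,sn,k) \<in> signed (loc cf q) \<longrightarrow> (m,sn) \<in> invoked (loc cf k)"
  and If: "\<forall>q\<in>C. \<forall>m1 m2 sn j. (m1,sn,j) \<in> signed (loc cf q) \<longrightarrow> (m2,sn,j) \<in> signed (loc cf q) \<longrightarrow> m1 = m2"
  and Ig: "\<forall>k\<in>C. \<forall>m1 m2 sn. (m1,sn) \<in> invoked (loc cf k) \<longrightarrow> (m2,sn) \<in> invoked (loc cf k) \<longrightarrow> m1 = m2"
  and Ih: "\<forall>q\<in>C. \<forall>m sn j. (m,sn,j) \<in> set (dlog (loc cf q)) \<longrightarrow>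
       j \<in> saved (loc cf q) (m,sn,j) \<and> n + t < 2 * card (saved (loc cf q) (m,sn,j)) \<and> signed_some sn j (loc cf q)"
  and Ii: "\<forall>q\<in>C. \<forall>sn j. length (filter (keyf sn j) (dlog (loc cf q))) \<le> 1"
  and Ij: "\<forall>q\<in>C. \<forall>sn j. length (filter (\<lambda>M. msg_key M = (sn,j)) (bclog (loc cf q)))
       \<le> (if signed_some sn j (loc cf q) then 1 else 0) + (if delivered_some sn j (loc cf q) then 1 else 0)"
  using assms[unfolded minv_def] by auto

lemma inv_init: "minv n t C init_config"
  unfolding minv_def init_config_def init_lstate_def by simp

lemma filter_keyf_empty:
  "\<not> delivered_some sn j s \<Longrightarrow> filter (keyf sn j) (dlog s) = []"
  unfolding delivered_some_def keyf_def by (auto simp: filter_empty_conv)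

lemma filter_key_empty:
  "\<forall>M\<in>set xs. msg_key M \<noteq> k \<Longrightarrow> filter (\<lambda>M. msg_key M = k) xs = []"
  by (auto simp: filter_empty_conv)

lemma inv_invoke:
  assumes I: "minv n t C cf" and Cn: "C \<subseteq> {1..n}" and iC: "i \<in> C"
    and fresh: "\<forall>m'. (m', sn) \<notin> invoked (loc cf i)"
    and cf': "cf' = cf\<lparr>loc := (loc cf)(i := fst (on_invoke i m sn (loc cf i))),
                  net := net cf + all_copies n i (clock cf) (snd (on_invoke i m sn (loc cf i))) Ds\<rparr>"
  shows "minv n t C cf'"
proof -
  let ?s = "loc cf i"
  let ?T = "(m,sn,i)"
  let ?X = "saved ?s ?T \<union> {i}"
  let ?M = "Bundle m sn i (sig_set ?T ?X)"
  define s' where "s' = ?s\<lparr>saved := (saved ?s)(?T := ?X),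
      signed := insert ?T (signed ?s), invoked := insert (m,sn) (invoked ?s),
      bclog := bclog ?s @ [?M]\<rparr>"
  have cf'': "cf' = cf\<lparr>loc := (loc cf)(i := s'), net := net cf + all_copies n i (clock cf) [?M] Ds\<rparr>"
    using cf' by (simp add: on_invoke_eq s'_def)
  note Ia = Ia[OF I] and Ib = Ib[OF I] and Ic = Ic[OF I] and Id = Id[OF I] and Ie = Ie[OF I]
    and If = If[OF I] and Ig = Ig[OF I] and Ih = Ih[OF I] and Ii = Ii[OF I] and Ij = Ij[OF I]
  have nsig: "\<not> signed_some sn i ?s"
    using Ie fresh iC unfolding signed_some_def by blast
  have ndel: "\<not> delivered_some sn i ?s"
    using Ih nsig iC unfolding delivered_some_def by blast
  have mono_signed: "\<And>k. signed (loc cf k) \<subseteq> signed (loc cf' k)"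
    using cf'' s'_def by auto
  have mono_inv: "\<And>k. invoked (loc cf k) \<subseteq> invoked (loc cf' k)"
    using cf'' s'_def by auto
  have a: "\<forall>q\<in>C. \<forall>T. saved (loc cf' q) T \<subseteq> {1..n}"
    using Ia Cn iC cf'' s'_def by auto
  have b: "\<forall>q\<in>C. \<forall>k\<in>C. \<forall>T. k \<in> saved (loc cf' q) T \<longrightarrow> T \<in> signed (loc cf' k)"
  proof (intro ballI allI impI)
    fix q k T assume q: "q \<in> C" and k: "k \<in> C" and ks: "k \<in> saved (loc cf' q) T"
    show "T \<in> signed (loc cf' k)"
    proof (cases "q = i \<and> T = ?T")
      case True
      then have "k = i \<or> k \<in> saved ?s ?T" using ks cf'' s'_def by auto
      then show ?thesis using True Ib iC k mono_signed cf'' s'_def by auto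
    next
      case False
      then have "k \<in> saved (loc cf q) T" using ks cf'' s'_def by (auto split: if_splits)
      then show ?thesis using Ib q k mono_signed by blast
    qed
  qed
  have c: "\<forall>cp\<in>#net cf'. \<forall>k T. (k,T) \<in> msg_sigs (cp_msg cp) \<longrightarrow> k \<in> C \<longrightarrow> T \<in> signed (loc cf' k)"
  proof (intro ballI allI impI)
    fix cp k T assume cp: "cp \<in># net cf'" and kT: "(k,T) \<in> msg_sigs (cp_msg cp)" and k: "k \<in> C"
    have "cp \<in># net cf \<or> cp \<in># all_copies n i (clock cf) [?M] Ds" using cp cf'' by auto
    then show "T \<in> signed (loc cf' k)"
    proof
      assume "cp \<in># net cf" then show ?thesis using Ic kT k mono_signed by blast
    next
      assume "cp \<in># all_copies n i (clock cf) [?M] Ds"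
      then have "cp_msg cp = ?M" using all_copies_mem by fastforce
      then have "T = ?T" "k = i \<or> k \<in> saved ?s ?T" using kT by auto
      then show ?thesis using Ib iC k mono_signed cf'' s'_def by auto
    qed
  qed
  have d: "\<forall>k T. (k,T) \<in> bknow cf' \<longrightarrow> k \<in> C \<longrightarrow> T \<in> signed (loc cf' k)"
    using Id mono_signed cf'' by (simp add: subset_iff)
  have e: "\<forall>q\<in>C. \<forall>k\<in>C. \<forall>m sn. (m,sn,k) \<in> signed (loc cf' q) \<longrightarrow> (m,sn) \<in> invoked (loc cf' k)"
    using Ie mono_inv cf'' s'_def iC
    by (auto split: if_splits)
  have f: "\<forall>q\<in>C. \<forall>m1 m2 sn j. (m1,sn,j) \<in> signed (loc cf' q) \<longrightarrow> (m2,sn,j) \<in> signed (loc cf' q) \<longrightarrow> m1 = m2"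
    using If nsig cf'' s'_def iC unfolding signed_some_def by (auto split: if_splits)
  have g: "\<forall>k\<in>C. \<forall>m1 m2 sn. (m1,sn) \<in> invoked (loc cf' k) \<longrightarrow> (m2,sn) \<in> invoked (loc cf' k) \<longrightarrow> m1 = m2"
    using Ig fresh cf'' s'_def iC by (auto split: if_splits)
  have h: "\<forall>q\<in>C. \<forall>m sn j. (m,sn,j) \<in> set (dlog (loc cf' q)) \<longrightarrow>
       j \<in> saved (loc cf' q) (m,sn,j) \<and> n + t < 2 * card (saved (loc cf' q) (m,sn,j)) \<and> signed_some sn j (loc cf' q)"
  proof (intro ballI allI impI)
    fix q m' sn' j assume q: "q \<in> C" and md: "(m',sn',j) \<in> set (dlog (loc cf' q))"
    show "j \<in> saved (loc cf' q) (m',sn',j) \<and> n + t < 2 * card (saved (loc cf' q) (m',sn',j)) \<and> signed_some sn' j (loc cf' q)"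
    proof (cases "q = i")
      case False then show ?thesis using Ih q md cf'' by auto
    next
      case True
      have old: "(m',sn',j) \<in> set (dlog ?s)" using md True cf'' s'_def by simp
      have fin: "finite (saved ?s ?T \<union> {i})" using Ia iC finite_subset[of _ "{1..n}"] by auto
      have "card (saved ?s (m',sn',j)) \<le> card (saved s' (m',sn',j))"
        using fin by (auto simp: s'_def intro!: card_mono)
      then show ?thesis using Ih iC old True cf'' s'_def unfolding signed_some_def by fastforce
    qed
  qed
  have i: "\<forall>q\<in>C. \<forall>sn j. length (filter (keyf sn j) (dlog (loc cf' q))) \<le> 1"
    using Ii cf'' s'_def by auto
  have j: "\<forall>q\<in>C. \<forall>sn' j. length (filter (\<lambda>M. msg_key M = (sn',j)) (bclog (loc cf' q)))
       \<le> (if signed_some sn' j (loc cf' q) then 1 else 0) + (if delivered_some sn' j (loc cf' q) then 1 else 0)"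
  proof (intro ballI allI)
    fix q sn' j assume q: "q \<in> C"
    show "length (filter (\<lambda>M. msg_key M = (sn',j)) (bclog (loc cf' q)))
       \<le> (if signed_some sn' j (loc cf' q) then 1 else 0) + (if delivered_some sn' j (loc cf' q) then 1 else 0)"
    proof (cases "q = i")
      case False then show ?thesis using Ij q cf'' by auto
    next
      case True
      have ds: "delivered_some sn' j (loc cf' q) = delivered_some sn' j ?s"
        using True cf'' s'_def unfolding delivered_some_def by simp
      have ss: "signed_some sn' j ?s \<Longrightarrow> signed_some sn' j (loc cf' q)"
        using True cf'' s'_def unfolding signed_some_def by auto
      show ?thesis
      proof (cases "(sn',j) = (sn,i)")
        case True
        have "length (filter (\<lambda>M. msg_key M = (sn',j)) (bclog ?s)) = 0"
        proof -
          have "length (filter (\<lambda>M. msg_key M = (sn,i)) (bclog ?s)) \<le> 0"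
          proof -
            have "length (filter (\<lambda>M. msg_key M = (sn,i)) (bclog ?s)) \<le> (if signed_some sn i ?s then 1 else 0) + (if delivered_some sn i ?s then 1 else 0)"
              using Ij iC by blast
            then show ?thesis using nsig ndel by simp
          qed
          then show ?thesis using True by simp
        qed
        moreover have "signed_some sn' j (loc cf' q)"
          using True \<open>q = i\<close> cf'' s'_def unfolding signed_some_def by auto
        ultimately show ?thesis using \<open>q = i\<close> cf'' s'_def by simp
      next
        case False
        have "length (filter (\<lambda>M. msg_key M = (sn',j)) (bclog (loc cf' q))) =
              length (filter (\<lambda>M. msg_key M = (sn',j)) (bclog ?s))"
          using False True cf'' s'_def by auto
        moreover have "length (filter (\<lambda>M. msg_key M = (sn',j)) (bclog ?s)) \<le> (if signed_some sn' j ?s then 1 else 0) + (if delivered_some sn' j ?s then 1 else 0)"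
          using Ij iC by blast
        ultimately show ?thesis using ds ss True by (auto split: if_splits)
      qed
    qed
  qed
  show ?thesis unfolding minv_def using a b c d e f g h i j by blast
qed

lemma inv_net_sub:
  assumes I: "minv n t C cf" and cf': "cf' = cf\<lparr>net := N\<rparr>" and sub: "N \<subseteq># net cf"
  shows "minv n t C cf'"
proof -
  have "\<forall>cp\<in>#N. \<forall>k T. (k,T) \<in> msg_sigs (cp_msg cp) \<longrightarrow> k \<in> C \<longrightarrow> T \<in> signed (loc cf k)"
    using Ic[OF I] sub by (meson mset_subset_eqD)
  then show ?thesis using I cf' unfolding minv_def by simp
qed

lemma inv_recv_go:
  assumes I: "minv n t C cf" and Cn: "C \<subseteq> {1..n}" and qC: "q \<in> C"
    and cpin: "cp \<in># net cf" and msg: "cp_msg cp = Bundle m sn j sigs"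
    and nd: "\<not> delivered_some sn j (loc cf q)" and jv: "j \<in> valid_signers n (m,sn,j) sigs"
    and cf': "cf' = cf\<lparr>loc := (loc cf)(q := fst (on_bundle n t q m sn j sigs (loc cf q))),
          net := (net cf - {#cp#}) + all_copies n q (clock cf) (snd (on_bundle n t q m sn j sigs (loc cf q))) Ds\<rparr>"
  shows "minv n t C cf'"
proof -
  note Ia = Ia[OF I] and Ib = Ib[OF I] and Ic = Ic[OF I] and Id = Id[OF I] and Ie = Ie[OF I]
    and If = If[OF I] and Ig = Ig[OF I] and Ih = Ih[OF I] and Ii = Ii[OF I] and Ij = Ij[OF I]
  define s where "s = loc cf q"
  define T where "T = (m,sn,j)"
  define ss where "ss = signed_some sn j s"
  define V where "V = valid_signers n T sigs"
  define sv where "sv = saved s T \<union> V \<union> (if ss then {} else {q})"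
  define dlv where "dlv = (n + t < 2 * card sv)"
  define M where "M = Bundle m sn j (sig_set T sv)"
  define outs where "outs = (if ss then [] else [M]) @ (if dlv then [M] else [])"
  define s' where "s' = s\<lparr>saved := (saved s)(T := sv),
        signed := (if ss then signed s else insert T (signed s)),
        dlog := dlog s @ (if dlv then [T] else []),
        bclog := bclog s @ outs\<rparr>"
  have ob: "on_bundle n t q m sn j sigs s = (s', outs)"
    using on_bundle_go[of sn j s n m sigs t q] nd jv
    unfolding s'_def outs_def M_def dlv_def sv_def V_def ss_def T_def s_def by simp
  have cf'': "cf' = cf\<lparr>loc := (loc cf)(q := s'), net := (net cf - {#cp#}) + all_copies n q (clock cf) outs Ds\<rparr>"
    using cf' ob s_def by simp
  have Lq: "loc cf' q = s'" and Lo: "\<And>k. k \<noteq> q \<Longrightarrow> loc cf' k = loc cf k" using cf'' by auto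
  have mono_signed: "\<And>k. signed (loc cf k) \<subseteq> signed (loc cf' k)"
    using cf'' s'_def s_def by auto
  have inv_eq: "\<And>k. invoked (loc cf' k) = invoked (loc cf k)"
    using cf'' s'_def s_def by auto
  have Vsub: "V \<subseteq> {1..n}" unfolding V_def valid_signers_def by auto
  have Vsig: "\<And>k. k \<in> V \<Longrightarrow> (k,T) \<in> sigs" unfolding V_def valid_signers_def by auto
  have jV: "j \<in> V" using jv unfolding V_def T_def .
  have sT: "saved s T \<subseteq> {1..n}" using Ia qC unfolding s_def by blast
  have svn: "sv \<subseteq> {1..n}" using sT qC Cn Vsub unfolding sv_def by auto
  have finsv: "finite sv" using svn finite_subset by blast
  have svC: "\<And>k. k \<in> C \<Longrightarrow> k \<in> sv \<Longrightarrow> T \<in> signed (loc cf' k)"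
  proof -
    fix k assume k: "k \<in> C" and ksv: "k \<in> sv"
    then consider "k \<in> saved s T" | "k \<in> V" | "\<not> ss \<and> k = q" unfolding sv_def by (auto split: if_splits)
    then show "T \<in> signed (loc cf' k)"
    proof cases
      case 1 then show ?thesis using Ib qC k mono_signed unfolding s_def by blast
    next
      case 2 then have "(k,T) \<in> msg_sigs (cp_msg cp)" using msg Vsig by simp
      then show ?thesis using Ic cpin k mono_signed by blast
    next
      case 3 then show ?thesis using Lq s'_def by simp
    qed
  qed
  have a: "\<forall>q\<in>C. \<forall>T. saved (loc cf' q) T \<subseteq> {1..n}"
    using Ia svn cf'' s'_def s_def by auto
  have b: "\<forall>q'\<in>C. \<forall>k\<in>C. \<forall>T'. k \<in> saved (loc cf' q') T' \<longrightarrow> T' \<in> signed (loc cf' k)"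
  proof (intro ballI allI impI)
    fix q' k T' assume q': "q' \<in> C" and k: "k \<in> C" and ks: "k \<in> saved (loc cf' q') T'"
    show "T' \<in> signed (loc cf' k)"
    proof (cases "q' = q \<and> T' = T")
      case True
      then have "k \<in> sv" using ks Lq s'_def by simp
      then show ?thesis using svC k True by simp
    next
      case False
      then have "k \<in> saved (loc cf q') T'" using ks cf'' s'_def s_def by (auto split: if_splits)
      then show ?thesis using Ib q' k mono_signed by blast
    qed
  qed
  have c: "\<forall>cp'\<in>#net cf'. \<forall>k T'. (k,T') \<in> msg_sigs (cp_msg cp') \<longrightarrow> k \<in> C \<longrightarrow> T' \<in> signed (loc cf' k)"
  proof (intro ballI allI impI)
    fix cp' k T' assume cp': "cp' \<in># net cf'" and kT: "(k,T') \<in> msg_sigs (cp_msg cp')" and k: "k \<in> C"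
    have "cp' \<in># net cf - {#cp#} \<or> cp' \<in># all_copies n q (clock cf) outs Ds" using cp' cf'' by auto
    then show "T' \<in> signed (loc cf' k)"
    proof
      assume "cp' \<in># net cf - {#cp#}"
      then have "cp' \<in># net cf" by (meson in_diffD)
      then show ?thesis using Ic kT k mono_signed by blast
    next
      assume "cp' \<in># all_copies n q (clock cf) outs Ds"
      then obtain M' where "M' \<in> set outs" "cp_msg cp' = M'" using all_copies_mem by fastforce
      then have "cp_msg cp' = M" unfolding outs_def by (auto split: if_splits)
      then have "T' = T" "k \<in> sv" using kT M_def by auto
      then show ?thesis using svC k by simp
    qed
  qed
  have d: "\<forall>k T. (k,T) \<in> bknow cf' \<longrightarrow> k \<in> C \<longrightarrow> T \<in> signed (loc cf' k)"
    using Id mono_signed cf'' by (simp add: subset_iff)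
  have e: "\<forall>q'\<in>C. \<forall>k\<in>C. \<forall>m' sn'. (m',sn',k) \<in> signed (loc cf' q') \<longrightarrow> (m',sn') \<in> invoked (loc cf' k)"
  proof (intro ballI allI impI)
    fix q' k m' sn' assume q': "q' \<in> C" and k: "k \<in> C" and sg: "(m',sn',k) \<in> signed (loc cf' q')"
    show "(m',sn') \<in> invoked (loc cf' k)"
    proof (cases "q' = q \<and> (m',sn',k) = T \<and> \<not> ss")
      case True
      then have "(k,T) \<in> msg_sigs (cp_msg cp)" using msg Vsig jV T_def by simp
      then have "T \<in> signed (loc cf k)" using Ic cpin k by blast
      then show ?thesis using Ie k True inv_eq by blast
    next
      case False
      then have "(m',sn',k) \<in> signed (loc cf q')" using sg cf'' s'_def s_def by (auto split: if_splits)
      then show ?thesis using Ie q' k inv_eq by blast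
    qed
  qed
  have f: "\<forall>q'\<in>C. \<forall>m1 m2 sn' j'. (m1,sn',j') \<in> signed (loc cf' q') \<longrightarrow> (m2,sn',j') \<in> signed (loc cf' q') \<longrightarrow> m1 = m2"
  proof (intro ballI allI impI)
    fix q' m1 m2 sn' j' assume q': "q' \<in> C" and s1: "(m1,sn',j') \<in> signed (loc cf' q')" and s2: "(m2,sn',j') \<in> signed (loc cf' q')"
    show "m1 = m2"
    proof (cases "q' = q")
      case False then show ?thesis using If q' s1 s2 Lo by auto
    next
      case True
      show ?thesis
      proof (cases ss)
        case True then show ?thesis using If qC s1 s2 Lq s'_def s_def \<open>q' = q\<close> by auto
      next
        case False
        then have "\<forall>m''. (m'',sn,j) \<notin> signed s" unfolding ss_def signed_some_def by blast
        then show ?thesis using If qC s1 s2 Lq s'_def s_def \<open>q' = q\<close> False T_def by auto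
      qed
    qed
  qed
  have g: "\<forall>k\<in>C. \<forall>m1 m2 sn. (m1,sn) \<in> invoked (loc cf' k) \<longrightarrow> (m2,sn) \<in> invoked (loc cf' k) \<longrightarrow> m1 = m2"
    using Ig inv_eq by simp
  have sv_sup: "saved s T \<subseteq> sv" unfolding sv_def by auto
  have sig_sup: "signed s \<subseteq> signed s'" unfolding s'_def by auto
  have h: "\<forall>q'\<in>C. \<forall>m' sn' j'. (m',sn',j') \<in> set (dlog (loc cf' q')) \<longrightarrow>
       j' \<in> saved (loc cf' q') (m',sn',j') \<and> n + t < 2 * card (saved (loc cf' q') (m',sn',j')) \<and> signed_some sn' j' (loc cf' q')"
  proof (intro ballI allI impI)
    fix q' m' sn' j' assume q': "q' \<in> C" and md: "(m',sn',j') \<in> set (dlog (loc cf' q'))"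
    show "j' \<in> saved (loc cf' q') (m',sn',j') \<and> n + t < 2 * card (saved (loc cf' q') (m',sn',j')) \<and> signed_some sn' j' (loc cf' q')"
    proof (cases "q' = q")
      case False then show ?thesis using Ih q' md Lo by auto
    next
      case True
      have sv': "saved s' (m',sn',j') = (if (m',sn',j') = T then sv else saved s (m',sn',j'))"
        unfolding s'_def by simp
      show ?thesis
      proof (cases "(m',sn',j') \<in> set (dlog s)")
        case True
        have old: "j' \<in> saved s (m',sn',j') \<and> n + t < 2 * card (saved s (m',sn',j')) \<and> signed_some sn' j' s"
          using Ih qC True s_def by blast
        have "card (saved s (m',sn',j')) \<le> card (saved s' (m',sn',j'))"
          using sv' sv_sup finsv card_mono by auto
        moreover have "signed_some sn' j' s'" using old sig_sup unfolding signed_some_def by blast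
        ultimately show ?thesis using old sv' sv_sup Lq \<open>q' = q\<close> by (auto split: if_splits)
      next
        case False
        then have "dlv" "(m',sn',j') = T" using md Lq \<open>q' = q\<close> s'_def by (auto split: if_splits)
        moreover have "signed_some sn j s'" using ss_def s'_def T_def unfolding signed_some_def by auto
        ultimately show ?thesis using Lq \<open>q' = q\<close> sv' jV dlv_def T_def sv_def by auto
      qed
    qed
  qed
  have i: "\<forall>q'\<in>C. \<forall>sn' j'. length (filter (keyf sn' j') (dlog (loc cf' q'))) \<le> 1"
  proof (intro ballI allI)
    fix q' sn' j' assume q': "q' \<in> C"
    show "length (filter (keyf sn' j') (dlog (loc cf' q'))) \<le> 1"
    proof (cases "q' = q \<and> dlv")
      case False then show ?thesis using Ii q' Lo Lq s'_def s_def by (cases "q' = q") auto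
    next
      case True
      show ?thesis
      proof (cases "(sn',j') = (sn,j)")
        case True
        have "filter (keyf sn j) (dlog s) = []" using filter_keyf_empty nd s_def by blast
        then show ?thesis using True \<open>q' = q \<and> dlv\<close> Lq s'_def by (simp add: keyf_def T_def)
      next
        case False
        then have "\<not> keyf sn' j' T" unfolding keyf_def T_def by auto
        then show ?thesis using Ii qC True Lq s'_def s_def by auto
      qed
    qed
  qed
  have j: "\<forall>q'\<in>C. \<forall>sn' j'. length (filter (\<lambda>M. msg_key M = (sn',j')) (bclog (loc cf' q')))
       \<le> (if signed_some sn' j' (loc cf' q') then 1 else 0) + (if delivered_some sn' j' (loc cf' q') then 1 else 0)"
  proof (intro ballI allI)
    fix q' sn' j' assume q': "q' \<in> C"
    have old: "length (filter (\<lambda>M. msg_key M = (sn',j')) (bclog (loc cf q')))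
       \<le> (if signed_some sn' j' (loc cf q') then 1 else 0) + (if delivered_some sn' j' (loc cf q') then 1 else 0)"
      using Ij q' by blast
    show "length (filter (\<lambda>M. msg_key M = (sn',j')) (bclog (loc cf' q')))
       \<le> (if signed_some sn' j' (loc cf' q') then 1 else 0) + (if delivered_some sn' j' (loc cf' q') then 1 else 0)"
    proof (cases "q' = q")
      case False then show ?thesis using old Lo by auto
    next
      case True
      have ssm: "signed_some sn' j' s \<Longrightarrow> signed_some sn' j' s'" using sig_sup unfolding signed_some_def by blast
      have dsm: "delivered_some sn' j' s \<Longrightarrow> delivered_some sn' j' s'" unfolding s'_def delivered_some_def by auto
      show ?thesis
      proof (cases "(sn',j') = (sn,j)")
        case False
        then have "filter (\<lambda>M. msg_key M = (sn',j')) outs = []" unfolding outs_def M_def by auto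
        then have "length (filter (\<lambda>M. msg_key M = (sn',j')) (bclog s')) = length (filter (\<lambda>M. msg_key M = (sn',j')) (bclog s))"
          unfolding s'_def by simp
        then show ?thesis using old True Lq s_def ssm dsm by (auto split: if_splits)
      next
        case True
        have o0: "length (filter (\<lambda>M. msg_key M = (sn,j)) (bclog s)) \<le> (if ss then 1 else 0)"
          using old True \<open>q' = q\<close> nd s_def ss_def by simp
        have s1: "signed_some sn j s'" using ss_def s'_def T_def unfolding signed_some_def by auto
        have d1: "dlv \<Longrightarrow> delivered_some sn j s'" using s'_def T_def unfolding delivered_some_def by auto
        have "length (filter (\<lambda>M. msg_key M = (sn,j)) (bclog s')) =
              length (filter (\<lambda>M. msg_key M = (sn,j)) (bclog s)) + (if ss then 0 else 1) + (if dlv then 1 else 0)"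
          unfolding s'_def outs_def M_def by simp
        then show ?thesis using o0 s1 d1 True \<open>q' = q\<close> Lq by (auto split: if_splits)
      qed
    qed
  qed
  show ?thesis unfolding minv_def using a b c d e f g h i j by blast
qed

lemma inv_step:
  assumes I: "minv n t C cf" and Cn: "C \<subseteq> {1..n}" and st: "step sync n t d C a cf cf'"
  shows "minv n t C cf'"
proof (cases a)
  case (Invoke i m sn Ds)
  obtain s' outs where oi: "on_invoke i m sn (loc cf i) = (s', outs)" by fastforce
  from st Invoke oi have "i \<in> C" "\<forall>m'. (m', sn) \<notin> invoked (loc cf i)"
    "cf' = cf\<lparr>loc := (loc cf)(i := s'), net := net cf + all_copies n i (clock cf) outs Ds\<rparr>"
    unfolding step_def by auto
  then show ?thesis using inv_invoke[OF I Cn, of i sn cf' m Ds] oi by simp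
next
  case (Recv cp Ds)
  obtain m sn j sigs where msg: "cp_msg cp = Bundle m sn j sigs" by (cases "cp_msg cp") auto
  define q where "q = cp_dst cp"
  obtain s' outs where ob: "on_bundle n t q m sn j sigs (loc cf q) = (s', outs)" by fastforce
  from st Recv msg ob have cpin: "cp \<in># net cf" and qC: "q \<in> C" and
    cf': "cf' = cf\<lparr>loc := (loc cf)(q := s'), net := (net cf - {#cp#}) + all_copies n q (clock cf) outs Ds\<rparr>"
    unfolding step_def q_def by (auto simp: Let_def)
  show ?thesis
  proof (cases "delivered_some sn j (loc cf q) \<or> j \<notin> valid_signers n (m,sn,j) sigs")
    case True
    then have "s' = loc cf q" "outs = []" using on_bundle_skip ob by (metis prod.inject)+
    then have "cf' = cf\<lparr>net := net cf - {#cp#}\<rparr>" using cf' by (simp add: all_copies_def)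
    then show ?thesis using inv_net_sub[OF I] by simp
  next
    case False
    then show ?thesis using inv_recv_go[OF I Cn qC cpin msg, of cf' Ds] cf' ob by simp
  qed
next
  case (ByzSend b q M)
  from st ByzSend have ok: "\<forall>(k, T)\<in>msg_sigs M. k \<in> C \<longrightarrow> (k, T) \<in> bknow cf"
    and cf': "cf' = cf\<lparr>net := net cf + {#(b, q, M, clock cf)#}\<rparr>" unfolding step_def by auto
  have "\<forall>k T. (k,T) \<in> msg_sigs M \<longrightarrow> k \<in> C \<longrightarrow> T \<in> signed (loc cf k)"
    using ok Id[OF I] by blast
  then show ?thesis using I cf' unfolding minv_def by auto
next
  case (ByzRecv cp)
  from st ByzRecv have cpin: "cp \<in># net cf"
    and cf': "cf' = cf\<lparr>net := net cf - {#cp#}, bknow := bknow cf \<union> msg_sigs (cp_msg cp)\<rparr>"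
    unfolding step_def by auto
  have c: "\<forall>cp'\<in>#net cf - {#cp#}. \<forall>k T. (k,T) \<in> msg_sigs (cp_msg cp') \<longrightarrow> k \<in> C \<longrightarrow> T \<in> signed (loc cf k)"
    using Ic[OF I] by (meson in_diffD)
  have "\<forall>k T. (k,T) \<in> msg_sigs (cp_msg cp) \<longrightarrow> k \<in> C \<longrightarrow> T \<in> signed (loc cf k)"
    using Ic[OF I] cpin by blast
  then show ?thesis using I cf' c unfolding minv_def by auto
next
  case Tick
  then have "cf' = cf\<lparr>clock := Suc (clock cf)\<rparr>" using st unfolding step_def by auto
  then show ?thesis using I unfolding minv_def by simp
qed

lemma inv_exec:
  assumes "execution sync n t d C acts cfs" "C \<subseteq> {1..n}"
  shows "minv n t C (cfs k)"
proof (induction k)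
  case 0 then show ?case using assms inv_init unfolding execution_def by simp
next
  case (Suc k) then show ?case using assms inv_step unfolding execution_def by blast
qed

lemma step_mono:
  assumes st: "step sync n t d C a cf cf'"
  shows "signed (loc cf q) \<subseteq> signed (loc cf' q) \<and> saved (loc cf q) T \<subseteq> saved (loc cf' q) T \<and>
         set (dlog (loc cf q)) \<subseteq> set (dlog (loc cf' q)) \<and> invoked (loc cf q) \<subseteq> invoked (loc cf' q)"
proof (cases a)
  case (Invoke i m sn Ds)
  obtain s' outs where oi: "on_invoke i m sn (loc cf i) = (s', outs)" by fastforce
  from st Invoke oi have "cf' = cf\<lparr>loc := (loc cf)(i := s'), net := net cf + all_copies n i (clock cf) outs Ds\<rparr>"
    unfolding step_def by auto
  then show ?thesis using oi by (auto simp: on_invoke_eq)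
next
  case (Recv cp Ds)
  obtain m sn j sigs where msg: "cp_msg cp = Bundle m sn j sigs" by (cases "cp_msg cp") auto
  define q' where "q' = cp_dst cp"
  obtain s' outs where ob: "on_bundle n t q' m sn j sigs (loc cf q') = (s', outs)" by fastforce
  from st Recv msg ob have
    cf': "cf' = cf\<lparr>loc := (loc cf)(q' := s'), net := (net cf - {#cp#}) + all_copies n q' (clock cf) outs Ds\<rparr>"
    unfolding step_def q'_def by (auto simp: Let_def)
  show ?thesis
  proof (cases "delivered_some sn j (loc cf q') \<or> j \<notin> valid_signers n (m,sn,j) sigs")
    case True
    then have "s' = loc cf q'" using on_bundle_skip ob by (metis prod.inject)
    then show ?thesis using cf' by auto
  next
    case False
    then show ?thesis using on_bundle_go[of sn j "loc cf q'" n m sigs t q'] ob cf' by (auto simp: Let_def)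
  qed
qed (use st in \<open>auto simp: step_def\<close>)

lemma exec_mono:
  assumes ex: "execution sync n t d C acts cfs" and kk: "k \<le> k'"
  shows "signed (loc (cfs k) q) \<subseteq> signed (loc (cfs k') q) \<and> saved (loc (cfs k) q) T \<subseteq> saved (loc (cfs k') q) T \<and>
         set (dlog (loc (cfs k) q)) \<subseteq> set (dlog (loc (cfs k') q)) \<and> invoked (loc (cfs k) q) \<subseteq> invoked (loc (cfs k') q)"
  using kk
proof (induction k' rule: dec_induct)
  case base then show ?case by simp
next
  case (step k'')
  have "step sync n t d C (acts k'') (cfs k'') (cfs (Suc k''))" using ex unfolding execution_def by blast
  from step_mono[OF this, of q T] step.IH show ?case by blast
qed

lemma delivered_mono:
  "execution sync n t d C acts cfs \<Longrightarrow> k \<le> k' \<Longrightarrow> delivered (cfs k) q T \<Longrightarrow> delivered (cfs k') q T"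
  unfolding delivered_def using exec_mono by blast

lemma delivered_some_mono:
  "execution sync n t d C acts cfs \<Longrightarrow> k \<le> k' \<Longrightarrow> delivered_some sn j (loc (cfs k) q) \<Longrightarrow> delivered_some sn j (loc (cfs k') q)"
  unfolding delivered_some_def using exec_mono by blast

lemma signed_mono:
  "execution sync n t d C acts cfs \<Longrightarrow> k \<le> k' \<Longrightarrow> T \<in> signed (loc (cfs k) q) \<Longrightarrow> T \<in> signed (loc (cfs k') q)"
  using exec_mono by blast

lemma saved_mono:
  "execution sync n t d C acts cfs \<Longrightarrow> k \<le> k' \<Longrightarrow> saved (loc (cfs k) q) T \<subseteq> saved (loc (cfs k') q) T"
  using exec_mono by blast

lemma invoked_mono:
  "execution sync n t d C acts cfs \<Longrightarrow> k \<le> k' \<Longrightarrow> invoked (loc (cfs k) q) \<subseteq> invoked (loc (cfs k') q)"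
  using exec_mono by blast

lemma validity_cf:
  assumes I: "minv n t C cf" and q: "q \<in> C" and j: "j \<in> C" and dl: "(m,sn,j) \<in> set (dlog (loc cf q))"
  shows "(m, sn) \<in> invoked (loc cf j)"
proof -
  have "j \<in> saved (loc cf q) (m,sn,j)" using Ih[OF I] q dl by blast
  then have "(m,sn,j) \<in> signed (loc cf j)" using Ib[OF I] q j by blast
  then show ?thesis using Ie[OF I] j by blast
qed

lemma quorum_inter:
  assumes Q1: "Q1 \<subseteq> {1..n}" and Q2: "Q2 \<subseteq> {1..n}" and c1: "n + t < 2 * card Q1" and c2: "n + t < 2 * card Q2"
    and Cn: "C \<subseteq> {1..n}" and cC: "n - t \<le> card C"
  shows "\<exists>k\<in>C. k \<in> Q1 \<and> k \<in> Q2"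
proof (rule ccontr)
  assume "\<not> ?thesis"
  then have sub: "Q1 \<inter> Q2 \<subseteq> {1..n} - C" using Q1 by auto
  have f1: "finite Q1" "finite Q2" using Q1 Q2 finite_subset by auto
  have "card (Q1 \<union> Q2) \<le> n" using Q1 Q2 card_mono[of "{1..n}" "Q1 \<union> Q2"] by auto
  moreover have "card (Q1 \<union> Q2) + card (Q1 \<inter> Q2) = card Q1 + card Q2" using card_Un_Int f1 by metis
  moreover have "card (Q1 \<inter> Q2) \<le> card ({1..n} - C)" using sub card_mono by blast
  moreover have "card ({1..n} - C) = n - card C" using Cn by (simp add: card_Diff_subset finite_subset)
  ultimately show False using c1 c2 cC by linarith
qed

lemma noduplicity_cf:
  assumes I: "minv n t C cf" and Cn: "C \<subseteq> {1..n}" and cC: "n - t \<le> card C" and q1: "q1 \<in> C" and q2: "q2 \<in> C"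
    and d1: "(m1,sn,j) \<in> set (dlog (loc cf q1))" and d2: "(m2,sn,j) \<in> set (dlog (loc cf q2))"
  shows "m1 = m2"
proof -
  obtain k where k: "k \<in> C" "k \<in> saved (loc cf q1) (m1,sn,j)" "k \<in> saved (loc cf q2) (m2,sn,j)"
    using quorum_inter[of "saved (loc cf q1) (m1,sn,j)" n "saved (loc cf q2) (m2,sn,j)" t C]
      Ia[OF I] Ih[OF I] q1 q2 d1 d2 Cn cC by blast
  then have "(m1,sn,j) \<in> signed (loc cf k)" "(m2,sn,j) \<in> signed (loc cf k)" using Ib[OF I] q1 q2 by blast+
  then show ?thesis using If[OF I] k by blast
qed

lemma first_time: "\<not> P (0::nat) \<Longrightarrow> P k \<Longrightarrow> \<exists>s<k. \<not> P s \<and> P (Suc s)"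
proof (induction k)
  case 0 then show ?case by simp
next
  case (Suc k) then show ?case by (cases "P k") (auto intro: less_SucI)
qed

lemma step_loc_changed:
  assumes st: "step sync n t d C a cf cf'" and ch: "loc cf' q \<noteq> loc cf q"
  shows "(\<exists>m sn Ds. a = Invoke q m sn Ds \<and> q \<in> C \<and> (\<forall>m'. (m',sn) \<notin> invoked (loc cf q)) \<and>
            adv_ok d C (snd (on_invoke q m sn (loc cf q))) Ds \<and>
            loc cf' q = fst (on_invoke q m sn (loc cf q)) \<and>
            net cf' = net cf + all_copies n q (clock cf) (snd (on_invoke q m sn (loc cf q))) Ds)
       \<or> (\<exists>cp Ds m sn j sigs. a = Recv cp Ds \<and> cp \<in># net cf \<and> cp_dst cp = q \<and> q \<in> C \<and>
            cp_msg cp = Bundle m sn j sigs \<and> \<not> delivered_some sn j (loc cf q) \<and>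
            j \<in> valid_signers n (m,sn,j) sigs \<and>
            adv_ok d C (snd (on_bundle n t q m sn j sigs (loc cf q))) Ds \<and>
            loc cf' q = fst (on_bundle n t q m sn j sigs (loc cf q)) \<and>
            net cf' = (net cf - {#cp#}) + all_copies n q (clock cf) (snd (on_bundle n t q m sn j sigs (loc cf q))) Ds)"
proof (cases a)
  case (Invoke i m sn Ds)
  obtain s' outs where oi: "on_invoke i m sn (loc cf i) = (s', outs)" by fastforce
  from st Invoke oi have *: "i \<in> C" "\<forall>m'. (m', sn) \<notin> invoked (loc cf i)" "adv_ok d C outs Ds"
    "cf' = cf\<lparr>loc := (loc cf)(i := s'), net := net cf + all_copies n i (clock cf) outs Ds\<rparr>"
    unfolding step_def by auto
  then have "i = q" using ch by (cases "i = q") auto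
  then show ?thesis using * oi Invoke by auto
next
  case (Recv cp Ds)
  obtain m sn j sigs where msg: "cp_msg cp = Bundle m sn j sigs" by (cases "cp_msg cp") auto
  define q' where "q' = cp_dst cp"
  obtain s' outs where ob: "on_bundle n t q' m sn j sigs (loc cf q') = (s', outs)" by fastforce
  from st Recv msg ob have *: "cp \<in># net cf" "q' \<in> C" "adv_ok d C outs Ds"
    "cf' = cf\<lparr>loc := (loc cf)(q' := s'), net := (net cf - {#cp#}) + all_copies n q' (clock cf) outs Ds\<rparr>"
    unfolding step_def q'_def by (auto simp: Let_def)
  then have qq: "q' = q" using ch by (cases "q' = q") auto
  have go: "\<not> (delivered_some sn j (loc cf q') \<or> j \<notin> valid_signers n (m,sn,j) sigs)"
  proof
    assume "delivered_some sn j (loc cf q') \<or> j \<notin> valid_signers n (m,sn,j) sigs"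
    then have "s' = loc cf q'" using on_bundle_skip ob by (metis prod.inject)
    then show False using ch * qq by simp
  qed
  show ?thesis using * go ob msg qq Recv q'_def by auto
qed (use st ch in \<open>auto simp: step_def\<close>)

lemma adv_ok_nth: "adv_ok d C outs Ds \<Longrightarrow> p < length outs \<Longrightarrow> Ds ! p \<subseteq> C \<and> card (Ds ! p) \<le> d \<and> length Ds = length outs"
  unfolding adv_ok_def by (metis nth_mem)

lemma deliver_event:
  assumes ex: "execution sync n t d C acts cfs" and Cn: "C \<subseteq> {1..n}"
    and nd: "\<not> delivered (cfs s) q (m,sn,j)" and dd: "delivered (cfs (Suc s)) q (m,sn,j)"
  shows "\<exists>sg D. D \<subseteq> C \<and> card D \<le> d \<and>
      (\<forall>q'\<in>{1..n}-D. (q,q',Bundle m sn j sg, clock (cfs s)) \<in># net (cfs (Suc s))) \<and>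
      n + t < 2 * card (valid_signers n (m,sn,j) sg) \<and> j \<in> valid_signers n (m,sn,j) sg \<and> q \<in> C"
proof -
  have st: "step sync n t d C (acts s) (cfs s) (cfs (Suc s))" using ex unfolding execution_def by blast
  have I: "minv n t C (cfs s)" using inv_exec[OF ex Cn] .
  have ch: "loc (cfs (Suc s)) q \<noteq> loc (cfs s) q" using nd dd unfolding delivered_def by auto
  from step_loc_changed[OF st ch] show ?thesis
  proof (elim disjE exE conjE)
    fix m' sn' Ds assume "loc (cfs (Suc s)) q = fst (on_invoke q m' sn' (loc (cfs s) q))"
    then show ?thesis using nd dd unfolding delivered_def by (simp add: on_invoke_eq)
  next
    fix cp Ds m' sn' j' sigs
    assume cpin: "cp \<in># net (cfs s)" and dst: "cp_dst cp = q" and qC: "q \<in> C"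
      and msg: "cp_msg cp = Bundle m' sn' j' sigs" and ndl: "\<not> delivered_some sn' j' (loc (cfs s) q)"
      and jv: "j' \<in> valid_signers n (m',sn',j') sigs"
      and adv: "adv_ok d C (snd (on_bundle n t q m' sn' j' sigs (loc (cfs s) q))) Ds"
      and lq: "loc (cfs (Suc s)) q = fst (on_bundle n t q m' sn' j' sigs (loc (cfs s) q))"
      and nt: "net (cfs (Suc s)) = (net (cfs s) - {#cp#}) + all_copies n q (clock (cfs s)) (snd (on_bundle n t q m' sn' j' sigs (loc (cfs s) q))) Ds"
    define S where "S = loc (cfs s) q"
    define T where "T = (m',sn',j')"
    define ss where "ss = signed_some sn' j' S"
    define sv where "sv = saved S T \<union> valid_signers n T sigs \<union> (if ss then {} else {q})"
    define dlv where "dlv = (n + t < 2 * card sv)"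
    define M where "M = Bundle m' sn' j' (sig_set T sv)"
    define outs where "outs = (if ss then [] else [M]) @ (if dlv then [M] else [])"
    have ob: "on_bundle n t q m' sn' j' sigs S = (S\<lparr>saved := (saved S)(T := sv),
        signed := (if ss then signed S else insert T (signed S)),
        dlog := dlog S @ (if dlv then [T] else []),
        bclog := bclog S @ outs\<rparr>, outs)"
      using on_bundle_go[of sn' j' S n m' sigs t q] ndl jv S_def
      unfolding outs_def M_def dlv_def sv_def ss_def T_def by simp
    have "(m,sn,j) \<in> set (dlog S @ (if dlv then [T] else []))" "(m,sn,j) \<notin> set (dlog S)"
      using dd nd lq ob S_def unfolding delivered_def by auto
    then have dlv and TT: "T = (m,sn,j)" by (auto split: if_splits)
    have sT: "saved S T \<subseteq> {1..n}" using Ia[OF I] qC S_def by blast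
    have svn: "sv \<subseteq> {1..n}" using sT qC Cn unfolding sv_def valid_signers_def by auto
    have jsv: "j' \<in> sv" using jv T_def sv_def by auto
    define p where "p = length outs - 1"
    have p: "p < length outs" "outs ! p = M" using \<open>dlv\<close> unfolding p_def outs_def by auto
    have adv': "adv_ok d C outs Ds" using adv ob S_def by simp
    have D: "Ds ! p \<subseteq> C" "card (Ds ! p) \<le> d" "length Ds = length outs" using adv_ok_nth[OF adv' p(1)] by auto
    have "\<forall>q'\<in>{1..n} - Ds ! p. (q, q', M, clock (cfs s)) \<in># net (cfs (Suc s))"
      using all_copies_nth[OF p(1) D(3)] p(2) nt ob S_def by auto
    then show ?thesis using D \<open>dlv\<close> TT svn jsv qC unfolding M_def dlv_def T_def
      by (intro exI[of _ "sig_set (m,sn,j) sv"] exI[of _ "Ds ! p"]) (auto simp: Int_absorb2)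
  qed
qed

lemma sign_event:
  assumes ex: "execution sync n t d C acts cfs" and Cn: "C \<subseteq> {1..n}"
    and nd: "(m,sn,j) \<notin> signed (loc (cfs s) q)" and dd: "(m,sn,j) \<in> signed (loc (cfs (Suc s)) q)"
  shows "\<exists>sg D. D \<subseteq> C \<and> card D \<le> d \<and>
      (\<forall>q'\<in>{1..n}-D. (q,q',Bundle m sn j sg, clock (cfs s)) \<in># net (cfs (Suc s))) \<and>
      q \<in> valid_signers n (m,sn,j) sg \<and> j \<in> valid_signers n (m,sn,j) sg \<and> q \<in> C"
proof -
  have st: "step sync n t d C (acts s) (cfs s) (cfs (Suc s))" using ex unfolding execution_def by blast
  have I: "minv n t C (cfs s)" using inv_exec[OF ex Cn] .
  have ch: "loc (cfs (Suc s)) q \<noteq> loc (cfs s) q" using nd dd by auto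
  from step_loc_changed[OF st ch] show ?thesis
  proof (elim disjE exE conjE)
    fix m' sn' Ds assume qC: "q \<in> C" and adv: "adv_ok d C (snd (on_invoke q m' sn' (loc (cfs s) q))) Ds"
      and lq: "loc (cfs (Suc s)) q = fst (on_invoke q m' sn' (loc (cfs s) q))"
      and nt: "net (cfs (Suc s)) = net (cfs s) + all_copies n q (clock (cfs s)) (snd (on_invoke q m' sn' (loc (cfs s) q))) Ds"
    define S where "S = loc (cfs s) q"
    define X where "X = saved S (m',sn',q) \<union> {q}"
    define M where "M = Bundle m' sn' q (sig_set (m',sn',q) X)"
    have oi: "snd (on_invoke q m' sn' S) = [M]" unfolding on_invoke_eq M_def X_def by simp
    have TT: "(m,sn,j) = (m',sn',q)" using nd dd lq S_def by (auto simp: on_invoke_eq)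
    have p: "0 < length [M]" "[M] ! 0 = M" by auto
    have adv': "adv_ok d C [M] Ds" using adv oi S_def by simp
    have D: "Ds ! 0 \<subseteq> C" "card (Ds ! 0) \<le> d" "length Ds = length [M]" using adv_ok_nth[OF adv' p(1)] by auto
    have "\<forall>q'\<in>{1..n} - Ds ! 0. (q, q', M, clock (cfs s)) \<in># net (cfs (Suc s))"
      using all_copies_nth[OF p(1) D(3)] p(2) nt oi S_def by auto
    moreover have "q \<in> {1..n}" using qC Cn by auto
    ultimately show ?thesis using D TT qC unfolding M_def X_def
      by (intro exI[of _ "sig_set (m,sn,j) X"] exI[of _ "Ds ! 0"]) (auto simp: mem_valid_signers X_def)
  next
    fix cp Ds m' sn' j' sigs
    assume cpin: "cp \<in># net (cfs s)" and dst: "cp_dst cp = q" and qC: "q \<in> C"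
      and msg: "cp_msg cp = Bundle m' sn' j' sigs" and ndl: "\<not> delivered_some sn' j' (loc (cfs s) q)"
      and jv: "j' \<in> valid_signers n (m',sn',j') sigs"
      and adv: "adv_ok d C (snd (on_bundle n t q m' sn' j' sigs (loc (cfs s) q))) Ds"
      and lq: "loc (cfs (Suc s)) q = fst (on_bundle n t q m' sn' j' sigs (loc (cfs s) q))"
      and nt: "net (cfs (Suc s)) = (net (cfs s) - {#cp#}) + all_copies n q (clock (cfs s)) (snd (on_bundle n t q m' sn' j' sigs (loc (cfs s) q))) Ds"
    define S where "S = loc (cfs s) q"
    define T where "T = (m',sn',j')"
    define ss where "ss = signed_some sn' j' S"
    define sv where "sv = saved S T \<union> valid_signers n T sigs \<union> (if ss then {} else {q})"
    define dlv where "dlv = (n + t < 2 * card sv)"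
    define M where "M = Bundle m' sn' j' (sig_set T sv)"
    define outs where "outs = (if ss then [] else [M]) @ (if dlv then [M] else [])"
    have ob: "on_bundle n t q m' sn' j' sigs S = (S\<lparr>saved := (saved S)(T := sv),
        signed := (if ss then signed S else insert T (signed S)),
        dlog := dlog S @ (if dlv then [T] else []),
        bclog := bclog S @ outs\<rparr>, outs)"
      using on_bundle_go[of sn' j' S n m' sigs t q] ndl jv S_def
      unfolding outs_def M_def dlv_def sv_def ss_def T_def by simp
    have "(m,sn,j) \<in> (if ss then signed S else insert T (signed S))" "(m,sn,j) \<notin> signed S"
      using dd nd lq ob S_def by auto
    then have nss: "\<not> ss" and TT: "T = (m,sn,j)" by (auto split: if_splits)
    have sT: "saved S T \<subseteq> {1..n}" using Ia[OF I] qC S_def by blast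
    have svn: "sv \<subseteq> {1..n}" using sT qC Cn unfolding sv_def valid_signers_def by auto
    have jsv: "j' \<in> sv" "q \<in> sv" using jv T_def sv_def nss by auto
    have p: "0 < length outs" "outs ! 0 = M" using nss unfolding outs_def by auto
    have adv': "adv_ok d C outs Ds" using adv ob S_def by simp
    have D: "Ds ! 0 \<subseteq> C" "card (Ds ! 0) \<le> d" "length Ds = length outs" using adv_ok_nth[OF adv' p(1)] by auto
    have "\<forall>q'\<in>{1..n} - Ds ! 0. (q, q', M, clock (cfs s)) \<in># net (cfs (Suc s))"
      using all_copies_nth[OF p(1) D(3)] p(2) nt ob S_def by auto
    then show ?thesis using D TT svn jsv qC unfolding M_def T_def
      by (intro exI[of _ "sig_set (m,sn,j) sv"] exI[of _ "Ds ! 0"]) (auto simp: Int_absorb2)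
  qed
qed

lemma recv_effect:
  assumes ex: "execution sync n t d C acts cfs" and ar: "acts r = Recv cp Ds"
    and dst: "cp_dst cp = q" and msg: "cp_msg cp = Bundle m sn j sg"
    and jv: "j \<in> valid_signers n (m,sn,j) sg"
  shows "delivered_some sn j (loc (cfs r) q) \<or>
    (valid_signers n (m,sn,j) sg \<subseteq> saved (loc (cfs (Suc r)) q) (m,sn,j) \<and>
     signed_some sn j (loc (cfs (Suc r)) q) \<and>
     (n + t < 2 * card (saved (loc (cfs (Suc r)) q) (m,sn,j)) \<longrightarrow> delivered (cfs (Suc r)) q (m,sn,j)))"
proof (cases "delivered_some sn j (loc (cfs r) q)")
  case True then show ?thesis by simp
next
  case False
  have st: "step sync n t d C (acts r) (cfs r) (cfs (Suc r))" using ex unfolding execution_def by blast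
  obtain s' outs where ob: "on_bundle n t q m sn j sg (loc (cfs r) q) = (s', outs)" by fastforce
  from st ar msg ob dst have lq: "loc (cfs (Suc r)) q = s'"
    unfolding step_def by (auto simp: Let_def)
  define S where "S = loc (cfs r) q"
  define T where "T = (m,sn,j)"
  define ss where "ss = signed_some sn j S"
  define sv where "sv = saved S T \<union> valid_signers n T sg \<union> (if ss then {} else {q})"
  define dlv where "dlv = (n + t < 2 * card sv)"
  have "s' = S\<lparr>saved := (saved S)(T := sv),
        signed := (if ss then signed S else insert T (signed S)),
        dlog := dlog S @ (if dlv then [T] else []),
        bclog := bclog S @ outs\<rparr>"
    using on_bundle_go[of sn j S n m sg t q] False jv S_def ob
    unfolding dlv_def sv_def ss_def T_def by (simp add: Let_def)
  then show ?thesis using lq unfolding sv_def T_def dlv_def ss_def delivered_def signed_some_def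
    by (auto simp: signed_some_def)
qed

lemma ex_common:
  assumes "finite A" "\<forall>x\<in>A. \<exists>r::nat. P x r" "\<And>x r r'. r \<le> r' \<Longrightarrow> P x r \<Longrightarrow> P x r'"
  shows "\<exists>K. \<forall>x\<in>A. P x K"
  using assms(1,2)
proof (induction A rule: finite_induct)
  case empty then show ?case by simp
next
  case (insert a A)
  then obtain K where K: "\<forall>x\<in>A. P x K" by blast
  obtain r where r: "P a r" using insert by blast
  have "\<forall>x\<in>insert a A. P x (max K r)" using K r assms(3) by (metis insert_iff max.cobounded1 max.cobounded2)
  then show ?case by blast
qed

lemma fair_recv:
  assumes "fair C acts cfs" "cp \<in># net (cfs k)" "cp_dst cp \<in> C"
  shows "\<exists>r\<ge>k. \<exists>Ds. acts r = Recv cp Ds"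
  using assms unfolding fair_def by blast

lemma delivered_some_eq:
  assumes ex: "execution sync n t d C acts cfs" and Cn: "C \<subseteq> {1..n}" and q: "q \<in> C" and j: "j \<in> C"
    and inv0: "(m, sn) \<in> invoked (loc (cfs k0) j)"
    and ds: "delivered_some sn j (loc (cfs k) q)"
  shows "delivered (cfs k) q (m,sn,j)"
proof -
  obtain m' where d: "(m',sn,j) \<in> set (dlog (loc (cfs k) q))" using ds unfolding delivered_some_def by blast
  have "(m',sn) \<in> invoked (loc (cfs k) j)" using validity_cf[OF inv_exec[OF ex Cn] q j d] .
  then have a: "(m',sn) \<in> invoked (loc (cfs (max k k0)) j)" using invoked_mono[OF ex, of k "max k k0" j] by auto
  have b: "(m,sn) \<in> invoked (loc (cfs (max k k0)) j)" using inv0 invoked_mono[OF ex, of k0 "max k k0" j] by auto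
  have "m' = m" using Ig[OF inv_exec[OF ex Cn]] j a b by blast
  then show ?thesis using d unfolding delivered_def by simp
qed

lemma signed_some_eq:
  assumes ex: "execution sync n t d C acts cfs" and Cn: "C \<subseteq> {1..n}" and q: "q \<in> C" and j: "j \<in> C"
    and inv0: "(m, sn) \<in> invoked (loc (cfs k0) j)"
    and ds: "signed_some sn j (loc (cfs k) q)"
  shows "(m,sn,j) \<in> signed (loc (cfs k) q)"
proof -
  obtain m' where d: "(m',sn,j) \<in> signed (loc (cfs k) q)" using ds unfolding signed_some_def by blast
  have "(m',sn) \<in> invoked (loc (cfs k) j)" using Ie[OF inv_exec[OF ex Cn]] q j d by blast
  then have a: "(m',sn) \<in> invoked (loc (cfs (max k k0)) j)" using invoked_mono[OF ex, of k "max k k0" j] by auto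
  have b: "(m,sn) \<in> invoked (loc (cfs (max k k0)) j)" using inv0 invoked_mono[OF ex, of k0 "max k k0" j] by auto
  have "m' = m" using Ig[OF inv_exec[OF ex Cn]] j a b by blast
  then show ?thesis using d by simp
qed

lemma collect:
  assumes ex: "execution sync n t d C acts cfs" and Cn: "C \<subseteq> {1..n}" and qC: "q \<in> C"
    and fin: "finite A" and ne: "A \<noteq> {}"
    and rcv: "\<forall>b\<in>A. \<exists>sg \<tau> Ds. acts (r b) = Recv (b, q, Bundle m sn j sg, \<tau>) Ds \<and>
                  b \<in> valid_signers n (m,sn,j) sg \<and> j \<in> valid_signers n (m,sn,j) sg"
    and big: "n + t < 2 * card A"
  shows "\<exists>b\<in>A. delivered_some sn j (loc (cfs (Suc (r b))) q)"
proof -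
  define T where "T = (m,sn,j)"
  define R where "R = Max (r ` A)"
  obtain bs where bs: "bs \<in> A" "r bs = R" using fin ne unfolding R_def
    by (metis (mono_tags, opaque_lifting) Max_in finite_imageI image_iff image_is_empty)
  show ?thesis
  proof (cases "delivered_some sn j (loc (cfs R) q)")
    case True
    then show ?thesis using bs delivered_some_mono[OF ex, of R "Suc R"] by auto
  next
    case False
    have inj: "\<And>b. b \<in> A \<Longrightarrow> r b = R \<Longrightarrow> b = bs"
    proof -
      fix b assume b: "b \<in> A" "r b = R"
      obtain sg \<tau> Ds where "acts (r b) = Recv (b, q, Bundle m sn j sg, \<tau>) Ds" using rcv b by blast
      moreover obtain sg' \<tau>' Ds' where "acts (r bs) = Recv (bs, q, Bundle m sn j sg', \<tau>') Ds'" using rcv bs by blast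
      ultimately show "b = bs" using b bs by simp
    qed
    have sub1: "A - {bs} \<subseteq> saved (loc (cfs R) q) T"
    proof
      fix b assume b: "b \<in> A - {bs}"
      have le: "r b \<le> R" using fin b unfolding R_def by auto
      have lt: "r b < R" using le inj b by (metis DiffE le_neq_implies_less singletonI)
      obtain sg \<tau> Ds where a: "acts (r b) = Recv (b, q, Bundle m sn j sg, \<tau>) Ds"
        and v: "b \<in> valid_signers n T sg" "j \<in> valid_signers n T sg" using rcv b T_def by blast
      have "delivered_some sn j (loc (cfs (r b)) q) \<or> valid_signers n T sg \<subseteq> saved (loc (cfs (Suc (r b))) q) T"
        unfolding T_def using recv_effect[OF ex a _ _ v(2)[unfolded T_def]] by (metis (no_types, lifting) fst_conv snd_conv cp_dst.simps cp_msg.simps)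
      then show "b \<in> saved (loc (cfs R) q) T"
      proof
        assume "delivered_some sn j (loc (cfs (r b)) q)"
        then have "delivered_some sn j (loc (cfs R) q)" using delivered_some_mono[OF ex] le by blast
        then show ?thesis using False by simp
      next
        assume "valid_signers n T sg \<subseteq> saved (loc (cfs (Suc (r b))) q) T"
        then show ?thesis using v saved_mono[OF ex, of "Suc (r b)" R q T] lt by auto
      qed
    qed
    obtain sg \<tau> Ds where a: "acts R = Recv (bs, q, Bundle m sn j sg, \<tau>) Ds"
      and v: "bs \<in> valid_signers n T sg" "j \<in> valid_signers n T sg" using rcv bs T_def by metis
    have eff: "valid_signers n T sg \<subseteq> saved (loc (cfs (Suc R)) q) T \<and>
       (n + t < 2 * card (saved (loc (cfs (Suc R)) q) T) \<longrightarrow> delivered (cfs (Suc R)) q T)"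
      using recv_effect[OF ex a _ _ v(2)[unfolded T_def]] False T_def by simp
    have "A \<subseteq> saved (loc (cfs (Suc R)) q) T"
      using sub1 saved_mono[OF ex, of R "Suc R" q T] eff v(1) by auto
    moreover have "finite (saved (loc (cfs (Suc R)) q) T)"
      using Ia[OF inv_exec[OF ex Cn]] qC finite_subset[of _ "{1..n}"] by blast
    ultimately have "card A \<le> card (saved (loc (cfs (Suc R)) q) T)" by (rule card_mono[rotated])
    then have "delivered (cfs (Suc R)) q T" using eff big by simp
    then show ?thesis using bs T_def unfolding delivered_def delivered_some_def by auto
  qed
qed

lemma noduplicity_exec:
  assumes ex: "execution sync n t d C acts cfs" and Cn: "C \<subseteq> {1..n}" and cC: "n - t \<le> card C"
    and q1: "q1 \<in> C" and q2: "q2 \<in> C"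
    and d1: "delivered (cfs k1) q1 (m1,sn,j)" and d2: "delivered (cfs k2) q2 (m2,sn,j)"
  shows "m1 = m2"
proof -
  have "delivered (cfs (max k1 k2)) q1 (m1,sn,j)" "delivered (cfs (max k1 k2)) q2 (m2,sn,j)"
    using delivered_mono[OF ex] d1 d2 by (meson max.cobounded1 max.cobounded2)+
  then show ?thesis using noduplicity_cf[OF inv_exec[OF ex Cn] Cn cC q1 q2] unfolding delivered_def by blast
qed

lemma not_delivered_init:
  "execution sync n t d C acts cfs \<Longrightarrow> \<not> delivered (cfs 0) q T"
  unfolding execution_def delivered_def init_config_def init_lstate_def by simp

lemma not_signed_init:
  "execution sync n t d C acts cfs \<Longrightarrow> T \<notin> signed (loc (cfs 0) q)"
  unfolding execution_def init_config_def init_lstate_def by simp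

lemma card_diff_ge: "finite C \<Longrightarrow> D \<subseteq> C \<Longrightarrow> card D \<le> d \<Longrightarrow> card C - d \<le> card (C - D)"
  by (simp add: card_Diff_subset finite_subset)

lemma saved_finite:
  assumes ex: "execution sync n t d C acts cfs" and Cn: "C \<subseteq> {1..n}" and q: "q \<in> C"
  shows "finite (saved (loc (cfs k) q) T)"
  using Ia[OF inv_exec[OF ex Cn]] q finite_subset[of _ "{1..n}"] by blast

lemma receive_quorum:
  assumes ex: "execution sync n t d C acts cfs" and Cn: "C \<subseteq> {1..n}" and cC: "n - t \<le> card C"
    and ar: "acts r = Recv cp Ds" and dst: "cp_dst cp = q'" and qC: "q' \<in> C"
    and msg: "cp_msg cp = Bundle m sn j sg"
    and big: "n + t < 2 * card (valid_signers n (m,sn,j) sg)" and jv: "j \<in> valid_signers n (m,sn,j) sg"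
    and other: "q \<in> C" "delivered (cfs k) q (m,sn,j)"
  shows "delivered (cfs (Suc r)) q' (m,sn,j)"
proof -
  from recv_effect[OF ex ar dst msg jv] show ?thesis
  proof
    assume "delivered_some sn j (loc (cfs r) q')"
    then obtain m'' where d: "delivered (cfs r) q' (m'',sn,j)" unfolding delivered_some_def delivered_def by blast
    then have "m'' = m" using noduplicity_exec[OF ex Cn cC qC other(1) d other(2)] by simp
    then show ?thesis using d delivered_mono[OF ex, of r "Suc r"] by auto
  next
    assume a: "valid_signers n (m,sn,j) sg \<subseteq> saved (loc (cfs (Suc r)) q') (m,sn,j) \<and>
     signed_some sn j (loc (cfs (Suc r)) q') \<and>
     (n + t < 2 * card (saved (loc (cfs (Suc r)) q') (m,sn,j)) \<longrightarrow> delivered (cfs (Suc r)) q' (m,sn,j))"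
    have "card (valid_signers n (m,sn,j) sg) \<le> card (saved (loc (cfs (Suc r)) q') (m,sn,j))"
      using a saved_finite[OF ex Cn qC] card_mono by blast
    then show ?thesis using a big by simp
  qed
qed

lemma global_delivery:
  assumes ex: "execution sync n t d C acts cfs" and fr: "fair C acts cfs" and Cn: "C \<subseteq> {1..n}"
    and cC: "n - t \<le> card C" and qC: "q \<in> C" and dl: "delivered (cfs k) q (m,sn,j)"
  shows "\<exists>k'. card C - d \<le> card {q' \<in> C. delivered (cfs k') q' (m,sn,j)}"
proof -
  obtain s where s: "s < k" "\<not> delivered (cfs s) q (m,sn,j)" "delivered (cfs (Suc s)) q (m,sn,j)"
    using first_time[of "\<lambda>s. delivered (cfs s) q (m,sn,j)" k] not_delivered_init[OF ex] dl by blast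
  obtain sg D where D: "D \<subseteq> C" "card D \<le> d"
    and cps: "\<forall>q'\<in>{1..n}-D. (q,q',Bundle m sn j sg, clock (cfs s)) \<in># net (cfs (Suc s))"
    and big: "n + t < 2 * card (valid_signers n (m,sn,j) sg)" and jv: "j \<in> valid_signers n (m,sn,j) sg"
    using deliver_event[OF ex Cn s(2,3)] by blast
  have "\<forall>q'\<in>C - D. \<exists>r. delivered (cfs r) q' (m,sn,j)"
  proof
    fix q' assume q': "q' \<in> C - D"
    then have cp: "(q,q',Bundle m sn j sg, clock (cfs s)) \<in># net (cfs (Suc s))" using cps Cn by auto
    obtain r Ds where "acts r = Recv (q,q',Bundle m sn j sg, clock (cfs s)) Ds"
      using fair_recv[OF fr cp] q' by auto
    then have "delivered (cfs (Suc r)) q' (m,sn,j)"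
      using receive_quorum[OF ex Cn cC _ _ _ _ big jv qC s(3)] q' by simp
    then show "\<exists>r. delivered (cfs r) q' (m,sn,j)" by blast
  qed
  then obtain K where K: "\<forall>q'\<in>C - D. delivered (cfs K) q' (m,sn,j)"
    using ex_common[of "C - D" "\<lambda>q' r. delivered (cfs r) q' (m,sn,j)"] delivered_mono[OF ex]
      finite_subset[OF Cn] by blast
  have "C - D \<subseteq> {q' \<in> C. delivered (cfs K) q' (m,sn,j)}" using K by auto
  then have "card (C - D) \<le> card {q' \<in> C. delivered (cfs K) q' (m,sn,j)}"
    using finite_subset[OF Cn] by (intro card_mono) auto
  moreover have "card C - d \<le> card (C - D)" using card_diff_ge[OF _ D] finite_subset[OF Cn] by blast
  ultimately show ?thesis by (meson le_trans)
qed

lemma card_filter_sum: "finite A \<Longrightarrow> card {b\<in>A. P b} = (\<Sum>b\<in>A. if P b then 1 else 0)"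
  by (simp add: sum.If_cases Int_def conj_commute)

lemma double_count:
  fixes R :: "'a \<Rightarrow> 'b set"
  assumes fP: "finite P" and fA: "finite A" and ne: "P \<noteq> {}"
    and lb: "\<forall>b\<in>A. c' \<le> card (P \<inter> R b)"
  shows "\<exists>q\<in>P. card A * c' \<le> card P * card {b\<in>A. q \<in> R b}"
proof (rule ccontr)
  assume "\<not> ?thesis"
  then have lt: "\<forall>q\<in>P. card P * card {b\<in>A. q \<in> R b} < card A * c'" by auto
  have eq: "(\<Sum>q\<in>P. card {b\<in>A. q \<in> R b}) = (\<Sum>b\<in>A. card (P \<inter> R b))"
  proof -
    have "(\<Sum>q\<in>P. card {b\<in>A. q \<in> R b}) = (\<Sum>q\<in>P. \<Sum>b\<in>A. if q \<in> R b then 1 else 0)"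
      using card_filter_sum[OF fA] by simp
    also have "\<dots> = (\<Sum>b\<in>A. \<Sum>q\<in>P. if q \<in> R b then 1 else 0)" by (rule sum.swap)
    also have "\<dots> = (\<Sum>b\<in>A. card (P \<inter> R b))"
      using card_filter_sum[OF fP] by (simp add: Int_def)
    finally show ?thesis .
  qed
  have "card A * c' \<le> (\<Sum>b\<in>A. card (P \<inter> R b))"
    using sum_mono[of A "\<lambda>_. c'" "\<lambda>b. card (P \<inter> R b)"] lb by simp
  then have ge: "card P * (card A * c') \<le> card P * (\<Sum>q\<in>P. card {b\<in>A. q \<in> R b})" using eq by simp
  have "card P * (\<Sum>q\<in>P. card {b\<in>A. q \<in> R b}) = (\<Sum>q\<in>P. card P * card {b\<in>A. q \<in> R b})"
    by (simp add: sum_distrib_left)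
  also have "\<dots> < (\<Sum>q\<in>P. card A * c')"
    using sum_strict_mono[OF fP ne, of "\<lambda>q. card P * card {b\<in>A. q \<in> R b}" "\<lambda>_. card A * c'"] lt by simp
  also have "\<dots> = card P * (card A * c')" by simp
  finally show False using ge by simp
qed

lemma invoke_effect:
  assumes ex: "execution sync n t d C acts cfs" and Cn: "C \<subseteq> {1..n}" and a: "acts k0 = Invoke i m sn Ds"
  shows "i \<in> C \<and> (m,sn) \<in> invoked (loc (cfs (Suc k0)) i) \<and> (m,sn,i) \<notin> signed (loc (cfs k0) i)
       \<and> (m,sn,i) \<in> signed (loc (cfs (Suc k0)) i)"
proof -
  have st: "step sync n t d C (acts k0) (cfs k0) (cfs (Suc k0))" using ex unfolding execution_def by blast
  obtain s' outs where oi: "on_invoke i m sn (loc (cfs k0) i) = (s', outs)" by fastforce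
  from st a oi have *: "i \<in> C" "\<forall>m'. (m', sn) \<notin> invoked (loc (cfs k0) i)" "loc (cfs (Suc k0)) i = s'"
    unfolding step_def by auto
  have "(m,sn,i) \<notin> signed (loc (cfs k0) i)"
    using Ie[OF inv_exec[OF ex Cn]] * by blast
  moreover have "loc (cfs (Suc k0)) i = fst (on_invoke i m sn (loc (cfs k0) i))" using * oi by simp
  ultimately show ?thesis using * by (simp add: on_invoke_eq)
qed

lemma arith_quorum:
  assumes cC: "n - t \<le> (c::nat)" and resil: "n > 3 * t + 2 * d"
  shows "n + t < 2 * (c - d)"
  using assms by linarith

lemma local_delivery:
  assumes ex: "execution sync n t d C acts cfs" and fr: "fair C acts cfs" and Cn: "C \<subseteq> {1..n}"
    and cC: "n - t \<le> card C" and resil: "n > 3 * t + 2 * d" and a: "acts k0 = Invoke i m sn Ds0"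
  shows "\<exists>k q. q \<in> C \<and> delivered (cfs k) q (m,sn,i)"
proof (rule ccontr)
  assume nodel: "\<not> ?thesis"
  have ie: "i \<in> C" "(m,sn) \<in> invoked (loc (cfs (Suc k0)) i)" "(m,sn,i) \<in> signed (loc (cfs (Suc k0)) i)"
    using invoke_effect[OF ex Cn a] by auto
  have NDS: "\<And>k q. q \<in> C \<Longrightarrow> \<not> delivered_some sn i (loc (cfs k) q)"
    using delivered_some_eq[OF ex Cn _ ie(1) ie(2)] nodel by blast
  define S where "S = {b\<in>C. \<exists>k. (m,sn,i) \<in> signed (loc (cfs k) b)}"
  have fS: "finite S" using finite_subset[OF Cn] S_def by auto
  have iS: "i \<in> S" using ie S_def by auto
  have "\<forall>b\<in>S. \<exists>sg D s. D \<subseteq> C \<and> card D \<le> d \<and>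
      (\<forall>q'\<in>{1..n}-D. (b,q',Bundle m sn i sg, clock (cfs s)) \<in># net (cfs (Suc s))) \<and>
      b \<in> valid_signers n (m,sn,i) sg \<and> i \<in> valid_signers n (m,sn,i) sg"
  proof
    fix b assume "b \<in> S"
    then obtain k where "(m,sn,i) \<in> signed (loc (cfs k) b)" unfolding S_def by blast
    then obtain s where s: "(m,sn,i) \<notin> signed (loc (cfs s) b)" "(m,sn,i) \<in> signed (loc (cfs (Suc s)) b)"
      using first_time[of "\<lambda>s. (m,sn,i) \<in> signed (loc (cfs s) b)" k] not_signed_init[OF ex] by blast
    show "\<exists>sg D s. D \<subseteq> C \<and> card D \<le> d \<and>
      (\<forall>q'\<in>{1..n}-D. (b,q',Bundle m sn i sg, clock (cfs s)) \<in># net (cfs (Suc s))) \<and>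
      b \<in> valid_signers n (m,sn,i) sg \<and> i \<in> valid_signers n (m,sn,i) sg"
      using sign_event[OF ex Cn s] by blast
  qed
  then obtain sgf Dd sf where ev: "\<forall>b\<in>S. Dd b \<subseteq> C \<and> card (Dd b) \<le> d \<and>
      (\<forall>q'\<in>{1..n}-Dd b. (b,q',Bundle m sn i (sgf b), clock (cfs (sf b))) \<in># net (cfs (Suc (sf b)))) \<and>
      b \<in> valid_signers n (m,sn,i) (sgf b) \<and> i \<in> valid_signers n (m,sn,i) (sgf b)"
    by metis
  have "\<forall>b\<in>S. \<forall>q\<in>C - Dd b. \<exists>r. (\<exists>Ds. acts r = Recv (b,q,Bundle m sn i (sgf b), clock (cfs (sf b))) Ds) \<and> q \<in> S"
  proof (intro ballI)
    fix b q assume b: "b \<in> S" and q: "q \<in> C - Dd b"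
    then have cp: "(b,q,Bundle m sn i (sgf b), clock (cfs (sf b))) \<in># net (cfs (Suc (sf b)))"
      using ev Cn by auto
    obtain r Ds where ar: "acts r = Recv (b,q,Bundle m sn i (sgf b), clock (cfs (sf b))) Ds"
      using fair_recv[OF fr cp] q by auto
    have "signed_some sn i (loc (cfs (Suc r)) q)"
      using recv_effect[OF ex ar _ _, of q m sn i "sgf b"] ev b NDS q by auto
    then have "(m,sn,i) \<in> signed (loc (cfs (Suc r)) q)"
      using signed_some_eq[OF ex Cn _ ie(1) ie(2)] q by blast
    then have "q \<in> S" using q S_def by auto
    then show "\<exists>r. (\<exists>Ds. acts r = Recv (b,q,Bundle m sn i (sgf b), clock (cfs (sf b))) Ds) \<and> q \<in> S"
      using ar by blast
  qed
  then obtain rr where rr: "\<forall>b\<in>S. \<forall>q\<in>C - Dd b. (\<exists>Ds. acts (rr b q) = Recv (b,q,Bundle m sn i (sgf b), clock (cfs (sf b))) Ds) \<and> q \<in> S"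
    by metis
  have lb: "\<forall>b\<in>S. card C - d \<le> card (S \<inter> (C - Dd b))"
  proof
    fix b assume b: "b \<in> S"
    have "S \<inter> (C - Dd b) = C - Dd b" using rr b by auto
    then show "card C - d \<le> card (S \<inter> (C - Dd b))"
      using card_diff_ge[of C "Dd b" d] ev b finite_subset[OF Cn] by auto
  qed
  obtain q where qS: "q \<in> S" and cnt: "card S * (card C - d) \<le> card S * card {b\<in>S. q \<in> C - Dd b}"
    using double_count[OF fS fS _ lb] iS by blast
  have cnt': "card C - d \<le> card {b\<in>S. q \<in> C - Dd b}" using cnt iS fS
    by (metis card_gt_0_iff empty_iff mult_le_cancel1)
  define A where "A = {b\<in>S. q \<in> C - Dd b}"
  have qC: "q \<in> C" using qS S_def by auto
  have big: "n + t < 2 * card A" unfolding A_def using arith_quorum[OF cC resil] cnt' by linarith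
  have ne: "A \<noteq> {}" using big by auto
  have "\<exists>b\<in>A. delivered_some sn i (loc (cfs (Suc (rr b q))) q)"
  proof (rule collect[OF ex Cn qC _ ne _ big])
    show "finite A" using fS A_def by auto
    show "\<forall>b\<in>A. \<exists>sg \<tau> Ds. acts (rr b q) = Recv (b, q, Bundle m sn i sg, \<tau>) Ds \<and>
                  b \<in> valid_signers n (m,sn,i) sg \<and> i \<in> valid_signers n (m,sn,i) sg"
      using rr ev A_def by blast
  qed
  then show False using NDS qC by blast
qed

lemma step_clock_net:
  assumes st: "step sync n t d C a cf cf'"
  shows "(a \<noteq> Tick \<longrightarrow> clock cf' = clock cf \<and> (\<forall>cp\<in>#net cf'. cp \<in># net cf \<or> cp_time cp = clock cf)) \<and>
         (a = Tick \<longrightarrow> clock cf' = Suc (clock cf) \<and> net cf' = net cf \<and> (sync \<longrightarrow> (\<forall>cp\<in>#net cf. clock cf \<le> cp_time cp)))"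
proof (cases a)
  case (Invoke i m sn Ds)
  obtain s' outs where oi: "on_invoke i m sn (loc cf i) = (s', outs)" by fastforce
  from st Invoke oi have "cf' = cf\<lparr>loc := (loc cf)(i := s'), net := net cf + all_copies n i (clock cf) outs Ds\<rparr>"
    unfolding step_def by auto
  then show ?thesis using Invoke all_copies_mem by fastforce
next
  case (Recv cp Ds)
  obtain m sn j sigs where msg: "cp_msg cp = Bundle m sn j sigs" by (cases "cp_msg cp") auto
  define q' where "q' = cp_dst cp"
  obtain s' outs where ob: "on_bundle n t q' m sn j sigs (loc cf q') = (s', outs)" by fastforce
  from st Recv msg ob have
    cf': "cf' = cf\<lparr>loc := (loc cf)(q' := s'), net := (net cf - {#cp#}) + all_copies n q' (clock cf) outs Ds\<rparr>"
    unfolding step_def q'_def by (auto simp: Let_def)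
  then show ?thesis using Recv all_copies_mem by (fastforce dest: in_diffD)
next
  case (ByzSend b q M)
  then show ?thesis using st unfolding step_def by auto
next
  case (ByzRecv cp)
  then show ?thesis using st unfolding step_def by (auto dest: in_diffD)
next
  case Tick
  then show ?thesis using st unfolding step_def by auto
qed

lemma clock_step:
  assumes ex: "execution sync n t d C acts cfs"
  shows "clock (cfs k) \<le> clock (cfs (Suc k)) \<and> clock (cfs (Suc k)) \<le> Suc (clock (cfs k))"
proof -
  have st: "step sync n t d C (acts k) (cfs k) (cfs (Suc k))" using ex unfolding execution_def by blast
  show ?thesis using step_clock_net[OF st] by (cases "acts k = Tick") auto
qed

lemma clock_mono:
  assumes ex: "execution sync n t d C acts cfs"
  shows "k \<le> k' \<Longrightarrow> clock (cfs k) \<le> clock (cfs k')"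
proof (induction k' rule: dec_induct)
  case base then show ?case by simp
next
  case (step k'') then show ?case using clock_step[OF ex, of k''] by linarith
qed

definition sinv :: "'m config \<Rightarrow> bool" where
  "sinv cf \<longleftrightarrow> (\<forall>cp\<in>#net cf. clock cf \<le> Suc (cp_time cp))"

lemma sinv_exec:
  assumes ex: "execution True n t d C acts cfs"
  shows "sinv (cfs k)"
proof (induction k)
  case 0 then show ?case using ex unfolding execution_def init_config_def sinv_def by simp
next
  case (Suc k)
  have st: "step True n t d C (acts k) (cfs k) (cfs (Suc k))" using ex unfolding execution_def by blast
  show ?case using step_clock_net[OF st] Suc unfolding sinv_def
    by (cases "acts k = Tick") force+
qed

lemma step_keep:
  assumes st: "step sync n t d C a cf cf'" and cp: "cp \<in># net cf"
    and nr: "\<forall>Ds. a \<noteq> Recv cp Ds" and nb: "a \<noteq> ByzRecv cp"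
  shows "cp \<in># net cf'"
proof (cases a)
  case (Invoke i m sn Ds)
  obtain s' outs where oi: "on_invoke i m sn (loc cf i) = (s', outs)" by fastforce
  from st Invoke oi have "cf' = cf\<lparr>loc := (loc cf)(i := s'), net := net cf + all_copies n i (clock cf) outs Ds\<rparr>"
    unfolding step_def by auto
  then show ?thesis using cp by simp
next
  case (Recv cp' Ds)
  obtain m sn j sigs where msg: "cp_msg cp' = Bundle m sn j sigs" by (cases "cp_msg cp'") auto
  define q' where "q' = cp_dst cp'"
  obtain s' outs where ob: "on_bundle n t q' m sn j sigs (loc cf q') = (s', outs)" by fastforce
  from st Recv msg ob have
    cf': "cf' = cf\<lparr>loc := (loc cf)(q' := s'), net := (net cf - {#cp'#}) + all_copies n q' (clock cf) outs Ds\<rparr>"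
    unfolding step_def q'_def by (auto simp: Let_def)
  have "cp \<noteq> cp'" using nr Recv by auto
  then have "cp \<in># net cf - {#cp'#}" using cp by (simp add: in_diff_count)
  then show ?thesis using cf' by simp
next
  case (ByzRecv cp')
  then have "cp \<noteq> cp'" using nb by auto
  then have "cp \<in># net cf - {#cp'#}" using cp by (simp add: in_diff_count)
  then show ?thesis using st ByzRecv unfolding step_def by auto
qed (use st cp in \<open>auto simp: step_def\<close>)

lemma sync_recv:
  assumes ex: "execution True n t d C acts cfs" and cp: "cp \<in># net (cfs k1)"
    and late: "cp_time cp + 2 \<le> clock (cfs k)"
  shows "\<exists>r. k1 \<le> r \<and> r < k \<and> ((\<exists>Ds. acts r = Recv cp Ds) \<or> acts r = ByzRecv cp)"
proof (rule ccontr)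
  assume nr: "\<not> ?thesis"
  have k1k: "k1 \<le> k"
  proof (rule ccontr)
    assume "\<not> k1 \<le> k"
    then have "clock (cfs k) \<le> clock (cfs k1)" using clock_mono[OF ex] by simp
    moreover have "clock (cfs k1) \<le> Suc (cp_time cp)" using sinv_exec[OF ex, of k1] cp unfolding sinv_def by blast
    ultimately show False using late by simp
  qed
  have "\<And>x. k1 + x \<le> k \<longrightarrow> cp \<in># net (cfs (k1 + x))"
  proof -
    fix x show "k1 + x \<le> k \<longrightarrow> cp \<in># net (cfs (k1 + x))"
    proof (induction x)
      case 0 then show ?case using cp by simp
    next
      case (Suc x)
      show ?case
      proof
        assume le: "k1 + Suc x \<le> k"
        have st: "step True n t d C (acts (k1 + x)) (cfs (k1 + x)) (cfs (Suc (k1 + x)))" using ex unfolding execution_def by blast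
        have "cp \<in># net (cfs (k1 + x))" using Suc le by simp
        moreover have "\<forall>Ds. acts (k1 + x) \<noteq> Recv cp Ds" "acts (k1 + x) \<noteq> ByzRecv cp" using nr le by auto
        ultimately show "cp \<in># net (cfs (k1 + Suc x))" using step_keep[OF st] by simp
      qed
    qed
  qed
  then have "cp \<in># net (cfs k)" using k1k by (metis le_add_diff_inverse order_refl)
  then have "clock (cfs k) \<le> Suc (cp_time cp)" using sinv_exec[OF ex, of k] unfolding sinv_def by blast
  then show False using late by simp
qed

lemma sync_recv_C:
  assumes ex: "execution True n t d C acts cfs" and cp: "cp \<in># net (cfs k1)" and dst: "cp_dst cp \<in> C"
    and late: "cp_time cp + 2 \<le> clock (cfs k)"
  shows "\<exists>r Ds. k1 \<le> r \<and> r < k \<and> acts r = Recv cp Ds \<and> clock (cfs r) \<le> Suc (cp_time cp)"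
proof -
  obtain r where r: "k1 \<le> r" "r < k" "(\<exists>Ds. acts r = Recv cp Ds) \<or> acts r = ByzRecv cp"
    using sync_recv[OF ex cp late] by blast
  have st: "step True n t d C (acts r) (cfs r) (cfs (Suc r))" using ex unfolding execution_def by blast
  have nb: "acts r \<noteq> ByzRecv cp" using st dst unfolding step_def by auto
  then obtain Ds where a: "acts r = Recv cp Ds" using r by blast
  then have "cp \<in># net (cfs r)" using st unfolding step_def by auto
  then have "clock (cfs r) \<le> Suc (cp_time cp)" using sinv_exec[OF ex, of r] unfolding sinv_def by blast
  then show ?thesis using r a by blast
qed

lemma delivered_some_signed:
  "minv n t C cf \<Longrightarrow> q \<in> C \<Longrightarrow> delivered_some sn j (loc cf q) \<Longrightarrow> signed_some sn j (loc cf q)"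
  using Ih unfolding delivered_some_def by blast

lemma round2:
  assumes ex: "execution True n t d C acts cfs" and Cn: "C \<subseteq> {1..n}"
    and a: "acts k0 = Invoke i m sn Ds0" and late: "clock (cfs k0) + 3 \<le> clock (cfs k)"
  shows "\<exists>B Dd sgf. B \<subseteq> C \<and> card C - d \<le> card B \<and>
     (\<forall>b\<in>B. Dd b \<subseteq> C \<and> card (Dd b) \<le> d \<and> b \<in> valid_signers n (m,sn,i) (sgf b) \<and> i \<in> valid_signers n (m,sn,i) (sgf b) \<and>
        (\<forall>q\<in>C - Dd b. \<exists>r \<tau> Ds. r < k \<and> clock (cfs r) \<le> clock (cfs k0) + 2 \<and>
              acts r = Recv (b,q,Bundle m sn i (sgf b),\<tau>) Ds))"
proof -
  define \<tau>0 where "\<tau>0 = clock (cfs k0)"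
  define T where "T = (m,sn,i)"
  have ie: "i \<in> C" "(m,sn) \<in> invoked (loc (cfs (Suc k0)) i)" "T \<notin> signed (loc (cfs k0) i)"
     "T \<in> signed (loc (cfs (Suc k0)) i)"
    using invoke_effect[OF ex Cn a] T_def by auto
  obtain sg0 D0 where D0: "D0 \<subseteq> C" "card D0 \<le> d"
    and cps0: "\<forall>q'\<in>{1..n}-D0. (i,q',Bundle m sn i sg0, \<tau>0) \<in># net (cfs (Suc k0))"
    and v0: "i \<in> valid_signers n T sg0"
    using sign_event[OF ex Cn ie(3)[unfolded T_def] ie(4)[unfolded T_def]] \<tau>0_def T_def by blast
  define B where "B = C - D0"
  have "\<forall>b\<in>B. \<exists>s. clock (cfs s) \<le> \<tau>0 + 1 \<and> T \<notin> signed (loc (cfs s) b) \<and> T \<in> signed (loc (cfs (Suc s)) b)"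
  proof
    fix b assume b: "b \<in> B"
    show "\<exists>s. clock (cfs s) \<le> \<tau>0 + 1 \<and> T \<notin> signed (loc (cfs s) b) \<and> T \<in> signed (loc (cfs (Suc s)) b)"
    proof (cases "b = i")
      case True then show ?thesis using ie \<tau>0_def by (intro exI[of _ k0]) auto
    next
      case False
      have bC: "b \<in> C" using b B_def by auto
      have cp: "(i,b,Bundle m sn i sg0, \<tau>0) \<in># net (cfs (Suc k0))" using cps0 b B_def Cn by auto
      obtain r Ds where r: "acts r = Recv (i,b,Bundle m sn i sg0, \<tau>0) Ds" "clock (cfs r) \<le> Suc \<tau>0"
        using sync_recv_C[OF ex cp _, of k] bC late \<tau>0_def by auto
      have I: "minv n t C (cfs r)" using inv_exec[OF ex Cn] .
      have "signed_some sn i (loc (cfs r) b) \<or> signed_some sn i (loc (cfs (Suc r)) b)"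
        using recv_effect[OF ex r(1), of b m sn i sg0] v0 T_def delivered_some_signed[OF I bC] by auto
      then have "T \<in> signed (loc (cfs r) b) \<or> T \<in> signed (loc (cfs (Suc r)) b)"
        using signed_some_eq[OF ex Cn bC ie(1) ie(2)] T_def by blast
      then have "T \<in> signed (loc (cfs (Suc r)) b)" using signed_mono[OF ex, of r "Suc r" T b] by auto
      then obtain s where s: "s < Suc r" "T \<notin> signed (loc (cfs s) b)" "T \<in> signed (loc (cfs (Suc s)) b)"
        using first_time[of "\<lambda>s. T \<in> signed (loc (cfs s) b)" "Suc r"] not_signed_init[OF ex] by blast
      have "clock (cfs s) \<le> clock (cfs r)" using clock_mono[OF ex] s(1) by simp
      then show ?thesis using s r(2) by (intro exI[of _ s]) auto
    qed
  qed
  then have "\<forall>b\<in>B. \<exists>sg D s. clock (cfs s) \<le> \<tau>0 + 1 \<and> D \<subseteq> C \<and> card D \<le> d \<and>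
      (\<forall>q'\<in>{1..n}-D. (b,q',Bundle m sn i sg, clock (cfs s)) \<in># net (cfs (Suc s))) \<and>
      b \<in> valid_signers n T sg \<and> i \<in> valid_signers n T sg"
    using sign_event[OF ex Cn] T_def by (metis (no_types, lifting))
  then obtain sgf Dd sf where ev: "\<forall>b\<in>B. clock (cfs (sf b)) \<le> \<tau>0 + 1 \<and> Dd b \<subseteq> C \<and> card (Dd b) \<le> d \<and>
      (\<forall>q'\<in>{1..n}-Dd b. (b,q',Bundle m sn i (sgf b), clock (cfs (sf b))) \<in># net (cfs (Suc (sf b)))) \<and>
      b \<in> valid_signers n T (sgf b) \<and> i \<in> valid_signers n T (sgf b)"
    by metis
  have rc: "\<forall>b\<in>B. \<forall>q\<in>C - Dd b. \<exists>r \<tau> Ds. r < k \<and> clock (cfs r) \<le> \<tau>0 + 2 \<and>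
              acts r = Recv (b,q,Bundle m sn i (sgf b),\<tau>) Ds"
  proof (intro ballI)
    fix b q assume b: "b \<in> B" and q: "q \<in> C - Dd b"
    have cp: "(b,q,Bundle m sn i (sgf b), clock (cfs (sf b))) \<in># net (cfs (Suc (sf b)))" using ev b q Cn by auto
    have lt: "cp_time (b,q,Bundle m sn i (sgf b), clock (cfs (sf b))) + 2 \<le> clock (cfs k)" using ev b late \<tau>0_def by fastforce
    have qC: "cp_dst (b,q,Bundle m sn i (sgf b), clock (cfs (sf b))) \<in> C" using q by simp
    obtain r Ds where "r < k" "acts r = Recv (b,q,Bundle m sn i (sgf b), clock (cfs (sf b))) Ds"
      "clock (cfs r) \<le> Suc (clock (cfs (sf b)))"
      using sync_recv_C[OF ex cp qC lt] by auto
    then show "\<exists>r \<tau> Ds. r < k \<and> clock (cfs r) \<le> \<tau>0 + 2 \<and> acts r = Recv (b,q,Bundle m sn i (sgf b),\<tau>) Ds"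
      using ev b by fastforce
  qed
  have "card C - d \<le> card B" unfolding B_def using card_diff_ge[OF _ D0] finite_subset[OF Cn] by blast
  then show ?thesis using ev rc B_def T_def \<tau>0_def
    by (intro exI[of _ B] exI[of _ Dd] exI[of _ sgf]) auto
qed

lemma two_step_d0:
  fixes c n t d :: nat
  assumes cn: "c \<le> n"
    and h: "real d < (real c - of_int \<lfloor>(real n + real t) / 2\<rfloor>) / (of_int \<lfloor>(real n + real t) / 2\<rfloor> + 1)"
  shows "d = 0"
proof (rule ccontr)
  assume "d \<noteq> 0"
  then have d1: "1 \<le> real d" by simp
  define F where "F = \<lfloor>(real n + real t) / 2\<rfloor>"
  have F0: "0 \<le> F" unfolding F_def by simp
  have Flow: "(real n + real t) / 2 - 1 < of_int F" unfolding F_def by linarith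
  have pos: "0 < (of_int F + 1 :: real)" using F0 by simp
  have h': "real d < (real c - of_int F) / (of_int F + 1)" using h unfolding F_def .
  have "real d * (of_int F + 1) < real c - of_int F"
    using h' pos by (simp add: pos_less_divide_eq)
  moreover have "1 * (of_int F + 1) \<le> real d * (of_int F + 1)" using d1 pos by (intro mult_right_mono) auto
  ultimately have "2 * real_of_int F + 1 < real c" by simp
  then have "2 * F + 1 < int c" by linarith
  then have "2 * F + 2 \<le> int c" by linarith
  then have "real_of_int (2 * F + 2) \<le> real_of_int (int c)" by (simp only: of_int_le_iff)
  then have "2 * real_of_int F + 2 \<le> real c" by simp
  moreover have "real n + real t < 2 * real_of_int F + 2" using Flow by (simp add: field_simps)
  ultimately have "real n + real t < real c" by linarith
  then show False using cn by simp
qed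

lemma three_step_arith:
  fixes c n t d :: nat
  assumes h: "real d < real c - sqrt (real c * ((real n + real t) / 2))"
  shows "d < c \<and> c * (n + t) < 2 * ((c - d) * (c - d))"
proof -
  define x where "x = sqrt (real c * ((real n + real t) / 2))"
  have x0: "0 \<le> x" unfolding x_def by simp
  have a: "x < real c - real d" using h by (simp add: x_def)
  have dc: "d < c" using a x0 by linarith
  have b: "0 < real c - real d" using a x0 by linarith
  have "x * x < (real c - real d) * (real c - real d)" using mult_strict_mono[OF a a b x0] .
  moreover have xx: "x * x = real c * ((real n + real t) / 2)"
  proof -
    have nn: "0 \<le> real c * ((real n + real t) / 2)" by simp
    have "x * x = \<bar>real c * ((real n + real t) / 2)\<bar>" unfolding x_def by (rule real_sqrt_mult_self)
    also have "\<dots> = real c * ((real n + real t) / 2)" using nn by (rule abs_of_nonneg)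
    finally show ?thesis .
  qed
  ultimately have lt0: "real c * ((real n + real t) / 2) < (real c - real d) * (real c - real d)" by simp
  have cd: "real c - real d = real (c - d)" using dc by (simp add: of_nat_diff)
  have lt1: "real c * ((real n + real t) / 2) < real (c - d) * real (c - d)" using lt0 unfolding cd .
  have h2: "real c * ((real n + real t) / 2) = (real c * (real n + real t)) / 2" by simp
  have lt2: "real c * (real n + real t) < 2 * (real (c - d) * real (c - d))" using lt1 unfolding h2 by linarith
  have e1: "real (c * (n + t)) = real c * (real n + real t)" by simp
  have e2: "real (2 * ((c - d) * (c - d))) = 2 * (real (c - d) * real (c - d))" by simp
  have "real (c * (n + t)) < real (2 * ((c - d) * (c - d)))" unfolding e1 e2 by (rule lt2)
  then show ?thesis using dc by (simp only: of_nat_less_iff)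
qed

lemma latency2:
  assumes ex: "execution True n t d C acts cfs" and Cn: "C \<subseteq> {1..n}" and cC: "n - t \<le> card C"
    and resil: "n > 3 * t + 2 * d" and a: "acts k0 = Invoke i m sn Ds0" and d0: "d = 0"
    and late: "clock (cfs k) > clock (cfs k0) + 2"
  shows "card C - d \<le> card {q \<in> C. delivered (cfs k) q (m, sn, i)}"
proof -
  have late': "clock (cfs k0) + 3 \<le> clock (cfs k)" using late by simp
  obtain B Dd sgf where B: "B \<subseteq> C" "card C - d \<le> card B"
    and ev: "\<forall>b\<in>B. Dd b \<subseteq> C \<and> card (Dd b) \<le> d \<and> b \<in> valid_signers n (m,sn,i) (sgf b) \<and> i \<in> valid_signers n (m,sn,i) (sgf b) \<and>
        (\<forall>q\<in>C - Dd b. \<exists>r \<tau> Ds. r < k \<and> clock (cfs r) \<le> clock (cfs k0) + 2 \<and>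
              acts r = Recv (b,q,Bundle m sn i (sgf b),\<tau>) Ds)"
    using round2[OF ex Cn a late'] by blast
  have ie: "i \<in> C" "(m,sn) \<in> invoked (loc (cfs (Suc k0)) i)" using invoke_effect[OF ex Cn a] by auto
  have fC: "finite C" using finite_subset[OF Cn] by simp
  have De: "\<And>b. b \<in> B \<Longrightarrow> Dd b = {}"
  proof -
    fix b assume "b \<in> B"
    then have "Dd b \<subseteq> C" "card (Dd b) \<le> 0" using ev d0 by auto
    then show "Dd b = {}" using fC by (meson card_0_eq finite_subset le_zero_eq)
  qed
  have all: "\<forall>q\<in>C. delivered (cfs k) q (m,sn,i)"
  proof
    fix q assume qC: "q \<in> C"
    have "\<forall>b\<in>B. \<exists>r. r < k \<and> (\<exists>sg \<tau> Ds. acts r = Recv (b, q, Bundle m sn i sg, \<tau>) Ds \<and>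
                  b \<in> valid_signers n (m,sn,i) sg \<and> i \<in> valid_signers n (m,sn,i) sg)"
      using ev De qC by fastforce
    then obtain rr where rr: "\<forall>b\<in>B. rr b < k \<and> (\<exists>sg \<tau> Ds. acts (rr b) = Recv (b, q, Bundle m sn i sg, \<tau>) Ds \<and>
                  b \<in> valid_signers n (m,sn,i) sg \<and> i \<in> valid_signers n (m,sn,i) sg)" by metis
    have big: "n + t < 2 * card B" using arith_quorum[OF cC resil] B d0 by linarith
    have ne: "B \<noteq> {}" using big by auto
    obtain b where b: "b \<in> B" "delivered_some sn i (loc (cfs (Suc (rr b))) q)"
      using collect[OF ex Cn qC _ ne _ big, of rr] rr finite_subset[OF B(1) fC] by blast
    have "Suc (rr b) \<le> k" using rr b by auto
    then have "delivered_some sn i (loc (cfs k) q)" using delivered_some_mono[OF ex] b by blast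
    then show "delivered (cfs k) q (m,sn,i)" using delivered_some_eq[OF ex Cn qC ie(1) ie(2)] by blast
  qed
  then have "{q \<in> C. delivered (cfs k) q (m, sn, i)} = C" by auto
  then show ?thesis by simp
qed

lemma latency3:
  assumes ex: "execution True n t d C acts cfs" and Cn: "C \<subseteq> {1..n}" and cC: "n - t \<le> card C"
    and a: "acts k0 = Invoke i m sn Ds0"
    and ar: "card C * (n + t) < 2 * ((card C - d) * (card C - d))" and dc: "d < card C"
    and late: "clock (cfs k) > clock (cfs k0) + 3"
  shows "card C - d \<le> card {q \<in> C. delivered (cfs k) q (m, sn, i)}"
proof -
  define c where "c = card C"
  have late': "clock (cfs k0) + 3 \<le> clock (cfs k)" using late by simp
  obtain B Dd sgf where B: "B \<subseteq> C" "card C - d \<le> card B"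
    and ev: "\<forall>b\<in>B. Dd b \<subseteq> C \<and> card (Dd b) \<le> d \<and> b \<in> valid_signers n (m,sn,i) (sgf b) \<and> i \<in> valid_signers n (m,sn,i) (sgf b) \<and>
        (\<forall>q\<in>C - Dd b. \<exists>r \<tau> Ds. r < k \<and> clock (cfs r) \<le> clock (cfs k0) + 2 \<and>
              acts r = Recv (b,q,Bundle m sn i (sgf b),\<tau>) Ds)"
    using round2[OF ex Cn a late'] by blast
  have ie: "i \<in> C" "(m,sn) \<in> invoked (loc (cfs (Suc k0)) i)" using invoke_effect[OF ex Cn a] by auto
  have fC: "finite C" using finite_subset[OF Cn] by simp
  have fB: "finite B" using finite_subset[OF B(1) fC] .
  have neC: "C \<noteq> {}" using dc by auto
  have lb: "\<forall>b\<in>B. card C - d \<le> card (C \<inter> (C - Dd b))"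
  proof
    fix b assume b: "b \<in> B"
    have "C \<inter> (C - Dd b) = C - Dd b" by auto
    then show "card C - d \<le> card (C \<inter> (C - Dd b))" using card_diff_ge[OF fC, of "Dd b" d] ev b by auto
  qed
  obtain q where qC: "q \<in> C" and cnt: "card B * (card C - d) \<le> card C * card {b\<in>B. q \<in> C - Dd b}"
    using double_count[OF fC fB neC lb] by blast
  define A where "A = {b\<in>B. q \<in> C - Dd b}"
  have "(c - d) * (c - d) \<le> card B * (c - d)" using B(2) c_def by simp
  moreover have "card B * (c - d) \<le> c * card A" using cnt unfolding c_def A_def .
  ultimately have x: "(c - d) * (c - d) \<le> c * card A" by (rule le_trans)
  have "c * (n + t) < 2 * (c * card A)" using ar[folded c_def] x by linarith
  then have "c * (n + t) < c * (2 * card A)" by (simp add: mult.left_commute)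
  then have big: "n + t < 2 * card A" by simp
  have ne: "A \<noteq> {}" using big by auto
  have fA: "finite A" using fB A_def by simp
  have "\<forall>b\<in>A. \<exists>r. r < k \<and> clock (cfs r) \<le> clock (cfs k0) + 2 \<and> (\<exists>sg \<tau> Ds. acts r = Recv (b, q, Bundle m sn i sg, \<tau>) Ds \<and>
                  b \<in> valid_signers n (m,sn,i) sg \<and> i \<in> valid_signers n (m,sn,i) sg)"
    using ev A_def by fastforce
  then obtain rr where rr: "\<forall>b\<in>A. rr b < k \<and> clock (cfs (rr b)) \<le> clock (cfs k0) + 2 \<and> (\<exists>sg \<tau> Ds. acts (rr b) = Recv (b, q, Bundle m sn i sg, \<tau>) Ds \<and>
                  b \<in> valid_signers n (m,sn,i) sg \<and> i \<in> valid_signers n (m,sn,i) sg)" by metis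
  obtain b where b: "b \<in> A" "delivered_some sn i (loc (cfs (Suc (rr b))) q)"
    using collect[OF ex Cn qC fA ne _ big, of rr] rr by blast
  have dq: "delivered (cfs (Suc (rr b))) q (m,sn,i)" using delivered_some_eq[OF ex Cn qC ie(1) ie(2)] b by blast
  obtain s where s: "s < Suc (rr b)" "\<not> delivered (cfs s) q (m,sn,i)" "delivered (cfs (Suc s)) q (m,sn,i)"
    using first_time[of "\<lambda>s. delivered (cfs s) q (m,sn,i)" "Suc (rr b)"] not_delivered_init[OF ex] dq by blast
  have cs: "clock (cfs s) \<le> clock (cfs k0) + 2" using clock_mono[OF ex, of s "rr b"] s(1) rr b by fastforce
  obtain sg D where D: "D \<subseteq> C" "card D \<le> d"
    and cps: "\<forall>q'\<in>{1..n}-D. (q,q',Bundle m sn i sg, clock (cfs s)) \<in># net (cfs (Suc s))"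
    and bg: "n + t < 2 * card (valid_signers n (m,sn,i) sg)" and jv: "i \<in> valid_signers n (m,sn,i) sg"
    using deliver_event[OF ex Cn s(2,3)] by blast
  have "\<forall>q'\<in>C - D. delivered (cfs k) q' (m,sn,i)"
  proof
    fix q' assume q': "q' \<in> C - D"
    have cp: "(q,q',Bundle m sn i sg, clock (cfs s)) \<in># net (cfs (Suc s))" using cps q' Cn by auto
    have lt: "cp_time (q,q',Bundle m sn i sg, clock (cfs s)) + 2 \<le> clock (cfs k)" using cs late by simp
    have dC: "cp_dst (q,q',Bundle m sn i sg, clock (cfs s)) \<in> C" using q' by simp
    obtain r Ds where r: "r < k" "acts r = Recv (q,q',Bundle m sn i sg, clock (cfs s)) Ds"
      using sync_recv_C[OF ex cp dC lt] by blast
    have "delivered (cfs (Suc r)) q' (m,sn,i)"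
      using receive_quorum[OF ex Cn cC r(2) _ _ _ bg jv qC s(3)] q' by simp
    then show "delivered (cfs k) q' (m,sn,i)" using delivered_mono[OF ex, of "Suc r" k] r(1) by simp
  qed
  then have "C - D \<subseteq> {q \<in> C. delivered (cfs k) q (m, sn, i)}" by auto
  then have "card (C - D) \<le> card {q \<in> C. delivered (cfs k) q (m, sn, i)}" using fC by (intro card_mono) auto
  moreover have "card C - d \<le> card (C - D)" using card_diff_ge[OF fC D] .
  ultimately show ?thesis by linarith
qed

theorem theorem1:
  fixes n t d :: nat and C :: "nat set"
  assumes C_procs: "C \<subseteq> {1..n}"
      and at_most_t_byz: "n - t \<le> card C"
      and d_lt_c: "d < card C"
      and resil: "n > 3 * t + 2 * d"
  shows
    \<comment> \<open>MBRB-Validity\<close>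
    "(\<forall>(acts :: nat \<Rightarrow> 'm action) cfs k q m sn j.
        execution False n t d C acts cfs \<and> q \<in> C \<and> j \<in> C \<and> delivered (cfs k) q (m, sn, j)
        \<longrightarrow> (m, sn) \<in> invoked (loc (cfs k) j))
   \<comment> \<open>MBRB-No-duplication\<close>
   \<and> (\<forall>(acts :: nat \<Rightarrow> 'm action) cfs k q sn j.
        execution False n t d C acts cfs \<and> q \<in> C
        \<longrightarrow> length (filter (\<lambda>(m', sn', j'). sn' = sn \<and> j' = j) (dlog (loc (cfs k) q))) \<le> 1)
   \<comment> \<open>MBRB-No-duplicity\<close>
   \<and> (\<forall>(acts :: nat \<Rightarrow> 'm action) cfs k1 k2 q1 q2 m1 m2 sn j.
        execution False n t d C acts cfs \<and> q1 \<in> C \<and> q2 \<in> C \<and>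
        delivered (cfs k1) q1 (m1, sn, j) \<and> delivered (cfs k2) q2 (m2, sn, j)
        \<longrightarrow> m1 = m2)
   \<comment> \<open>MBRB-Local-delivery\<close>
   \<and> (\<forall>(acts :: nat \<Rightarrow> 'm action) cfs k i m sn Ds.
        execution False n t d C acts cfs \<and> fair C acts cfs \<and> i \<in> C \<and> acts k = Invoke i m sn Ds
        \<longrightarrow> (\<exists>k' q. q \<in> C \<and> delivered (cfs k') q (m, sn, i)))
   \<comment> \<open>MBRB-Global-delivery with l = c - d\<close>
   \<and> (\<forall>(acts :: nat \<Rightarrow> 'm action) cfs k q m sn j.
        execution False n t d C acts cfs \<and> fair C acts cfs \<and> q \<in> C \<and> delivered (cfs k) q (m, sn, j)
        \<longrightarrow> (\<exists>k'. card C - d \<le> card {q' \<in> C. delivered (cfs k') q' (m, sn, j)}))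
   \<comment> \<open>Latency: with all transfer delays equal to one communication step\<close>
   \<and> (\<forall>(acts :: nat \<Rightarrow> 'm action) cfs k0 i m sn Ds.
        execution True n t d C acts cfs \<and> fair C acts cfs \<and> time_progresses acts \<and>
        i \<in> C \<and> acts k0 = Invoke i m sn Ds
        \<longrightarrow> (real d < (real (card C) - of_int \<lfloor>(real n + real t) / 2\<rfloor>)
                        / (of_int \<lfloor>(real n + real t) / 2\<rfloor> + 1)
              \<longrightarrow> (\<forall>k. clock (cfs k) > clock (cfs k0) + 2
                     \<longrightarrow> card C - d \<le> card {q \<in> C. delivered (cfs k) q (m, sn, i)}))
          \<and> (real d < real (card C) - sqrt (real (card C) * ((real n + real t) / 2))
              \<longrightarrow> (\<forall>k. clock (cfs k) > clock (cfs k0) + 3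
                     \<longrightarrow> card C - d \<le> card {q \<in> C. delivered (cfs k) q (m, sn, i)})))
   \<comment> \<open>Message complexity: each broadcast sends n imp-messages\<close>
   \<and> (\<forall>(acts :: nat \<Rightarrow> 'm action) cfs k0 i m sn Ds k.
        execution False n t d C acts cfs \<and> i \<in> C \<and> acts k0 = Invoke i m sn Ds
        \<longrightarrow> n * (\<Sum>q \<in> C. length (filter (\<lambda>M. msg_key M = (sn, i)) (bclog (loc (cfs k) q))))
            \<le> 2 * n ^ 2)"
proof -
  have cn: "card C \<le> n" using card_mono[OF _ C_procs] by simp
  have fC: "finite C" using finite_subset[OF C_procs] by simp
  show ?thesis
  proof (intro conjI allI impI)
    fix acts :: "nat \<Rightarrow> 'm action" and cfs k q m sn j
    assume h: "execution False n t d C acts cfs \<and> q \<in> C \<and> j \<in> C \<and> delivered (cfs k) q (m, sn, j)"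
    then have ex: "execution False n t d C acts cfs" by blast
    show "(m, sn) \<in> invoked (loc (cfs k) j)"
      using validity_cf[OF inv_exec[OF ex C_procs]] h unfolding delivered_def by blast
  next
    fix acts :: "nat \<Rightarrow> 'm action" and cfs k q sn j
    assume h: "execution False n t d C acts cfs \<and> q \<in> C"
    have ex: "execution False n t d C acts cfs" using h by simp
    have "length (filter (keyf sn j) (dlog (loc (cfs k) q))) \<le> 1"
      using Ii[OF inv_exec[OF ex C_procs]] h by blast
    then show "length (filter (\<lambda>(m', sn', j'). sn' = sn \<and> j' = j) (dlog (loc (cfs k) q))) \<le> 1"
      unfolding keyf_def .
  next
    fix acts :: "nat \<Rightarrow> 'm action" and cfs k1 k2 q1 q2 m1 m2 sn j
    assume h: "execution False n t d C acts cfs \<and> q1 \<in> C \<and> q2 \<in> C \<and>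
        delivered (cfs k1) q1 (m1, sn, j) \<and> delivered (cfs k2) q2 (m2, sn, j)"
    then have ex: "execution False n t d C acts cfs" and x: "q1 \<in> C" "q2 \<in> C"
      "delivered (cfs k1) q1 (m1, sn, j)" "delivered (cfs k2) q2 (m2, sn, j)" by simp_all
    show "m1 = m2" using noduplicity_exec[OF ex C_procs at_most_t_byz x] .
  next
    fix acts :: "nat \<Rightarrow> 'm action" and cfs k i m sn Ds
    assume h: "execution False n t d C acts cfs \<and> fair C acts cfs \<and> i \<in> C \<and> acts k = Invoke i m sn Ds"
    then show "\<exists>k' q. q \<in> C \<and> delivered (cfs k') q (m, sn, i)"
    proof -
      have ex: "execution False n t d C acts cfs" and fr: "fair C acts cfs" and a: "acts k = Invoke i m sn Ds"
        using h by simp_all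
      show ?thesis using local_delivery[OF ex fr C_procs at_most_t_byz resil a] .
    qed
  next
    fix acts :: "nat \<Rightarrow> 'm action" and cfs k q m sn j
    assume h: "execution False n t d C acts cfs \<and> fair C acts cfs \<and> q \<in> C \<and> delivered (cfs k) q (m, sn, j)"
    then show "\<exists>k'. card C - d \<le> card {q' \<in> C. delivered (cfs k') q' (m, sn, j)}"
    proof -
      have ex: "execution False n t d C acts cfs" and fr: "fair C acts cfs" and x: "q \<in> C" "delivered (cfs k) q (m, sn, j)"
        using h by simp_all
      show ?thesis using global_delivery[OF ex fr C_procs at_most_t_byz x] .
    qed
  next
    fix acts :: "nat \<Rightarrow> 'm action" and cfs k0 i m sn Ds k
    assume h: "execution True n t d C acts cfs \<and> fair C acts cfs \<and> time_progresses acts \<and>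
        i \<in> C \<and> acts k0 = Invoke i m sn Ds"
      and c2: "real d < (real (card C) - of_int \<lfloor>(real n + real t) / 2\<rfloor>)
                        / (of_int \<lfloor>(real n + real t) / 2\<rfloor> + 1)"
      and lt: "clock (cfs k) > clock (cfs k0) + 2"
    have "d = 0" using two_step_d0[OF cn c2] .
    then show "card C - d \<le> card {q \<in> C. delivered (cfs k) q (m, sn, i)}"
    proof -
      have ex: "execution True n t d C acts cfs" and a: "acts k0 = Invoke i m sn Ds" using h by simp_all
      show ?thesis using latency2[OF ex C_procs at_most_t_byz resil a \<open>d = 0\<close> lt] .
    qed
  next
    fix acts :: "nat \<Rightarrow> 'm action" and cfs k0 i m sn Ds k
    assume h: "execution True n t d C acts cfs \<and> fair C acts cfs \<and> time_progresses acts \<and>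
        i \<in> C \<and> acts k0 = Invoke i m sn Ds"
      and c3: "real d < real (card C) - sqrt (real (card C) * ((real n + real t) / 2))"
      and lt: "clock (cfs k) > clock (cfs k0) + 3"
    have a3: "d < card C \<and> card C * (n + t) < 2 * ((card C - d) * (card C - d))"
      using three_step_arith[OF c3] .
    then show "card C - d \<le> card {q \<in> C. delivered (cfs k) q (m, sn, i)}"
    proof -
      have ex: "execution True n t d C acts cfs" and a: "acts k0 = Invoke i m sn Ds" using h by simp_all
      show ?thesis using latency3[OF ex C_procs at_most_t_byz a _ _ lt] a3 by blast
    qed
  next
    fix acts :: "nat \<Rightarrow> 'm action" and cfs k0 i m sn Ds k
    assume h: "execution False n t d C acts cfs \<and> i \<in> C \<and> acts k0 = Invoke i m sn Ds"
    have ex: "execution False n t d C acts cfs" using h by simp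
    have I: "minv n t C (cfs k)" using inv_exec[OF ex C_procs] .
    have each: "\<forall>q\<in>C. length (filter (\<lambda>M. msg_key M = (sn, i)) (bclog (loc (cfs k) q))) \<le> 2"
    proof
      fix q assume q: "q \<in> C"
      have "length (filter (\<lambda>M. msg_key M = (sn, i)) (bclog (loc (cfs k) q)))
       \<le> (if signed_some sn i (loc (cfs k) q) then 1 else 0) + (if delivered_some sn i (loc (cfs k) q) then 1 else 0)"
        using Ij[OF I] q by blast
      then show "length (filter (\<lambda>M. msg_key M = (sn, i)) (bclog (loc (cfs k) q))) \<le> 2"
        by (auto split: if_splits)
    qed
    have "(\<Sum>q \<in> C. length (filter (\<lambda>M. msg_key M = (sn, i)) (bclog (loc (cfs k) q)))) \<le> (\<Sum>q\<in>C. 2)"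
      using each by (intro sum_mono) auto
    also have "\<dots> = 2 * card C" by simp
    also have "\<dots> \<le> 2 * n" using cn by simp
    finally have s: "(\<Sum>q \<in> C. length (filter (\<lambda>M. msg_key M = (sn, i)) (bclog (loc (cfs k) q)))) \<le> 2 * n" .
    have "n * (\<Sum>q \<in> C. length (filter (\<lambda>M. msg_key M = (sn, i)) (bclog (loc (cfs k) q)))) \<le> n * (2 * n)"
      using s by (rule mult_left_mono) simp
    also have "\<dots> = 2 * n ^ 2" by (simp add: power2_eq_square)
    finally show "n * (\<Sum>q \<in> C. length (filter (\<lambda>M. msg_key M = (sn, i)) (bclog (loc (cfs k) q)))) \<le> 2 * n ^ 2" .
  qed
qed

end
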